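(* Let $\mathcal S=\{s_1,\dots,s_n,(p_1,l_1),\dots,(p_m,l_m)\}$ be a configuration. Suppose there exists $f\in F_{\mathcal S}$ such that (1) $\mathcal Z(f)=\{s_1,\dots,s_n,p_1,\dots,p_m\}$; (2) $\operatorname{inp}_f(s_i)=\emptyset$ for all $i=1,\dots,n$; (3) $\operatorname{ord}_{p_j}(f)=2$ for all $j=1,\dots,m$; (4) for each $j=1,\dots,m$, $D_f''(0)\ne0$, where $D_f$ is the discriminant of $f$ at $p_j$ computed in some affine coordinates centered at $p_j$ in which $l_j=\{y=0\}$. Then $\operatorname{span}(F_{\mathcal S})=I_{\mathcal S}$; in particular $\dim I_{\mathcal S}=\dim F_{\mathcal S}$.
   Context: Notation. $H_k\subseteq\mathbb R[x,y,z]$ is the real vector space of ternary forms of degree $k$. For $I\subseteq H_k$ (or a single form), $\mathcal Z(I)$ is the set of common real zeros in $\mathbb P^2(\mathbb R)$. $P_{3,4}=\{f\in H_4: f\ge0\text{ on }\mathbb P^2(\mathbb R)\}$. Local notation. For $p\in\mathbb P^2(\mathbb R)$, affine coordinates centered at $p$ are obtained by an invertible real linear change of coordinates sending $p$ to $(0:0:1)$ followed by setting $z=1$; $f\in H_4$ becomes $f(x,y)=\sum_{i+j\le4}a_{ij}x^iy^j=f_0+\dots+f_4$ ($f_k$ homogeneous of degree $k$), and $\operatorname{ord}_p(f)$ is the least $k$ with $f_k\ne0$. If $\operatorname{ord}_pf\ge2$, put $\tilde f(x,y)=f(x,xy)/x^2=f_2(1,y)+xf_3(1,y)+x^2f_4(1,y)$;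 the set $\operatorname{inp}_f(p)$ of first-order real infinitely near points of $f$ at $p$ is the set of real directions $[u:w]\in\mathbb P^1(\mathbb R)$ with $f_2(u,w)=0$ (all directions if $f_2=0$). The discriminant of $f$ at $p$ is $D_f(y)=(f_3^2-4f_2f_4)(1,y)$. Sets. $F_s=\{f\in P_{3,4}: f(s)=0\}$, $I_s=\{f\in H_4:\operatorname{ord}_sf\ge2\}$. For a real line $l\ni p$, in affine coordinates centered at $p$ with $l=\{y=0\}$: $F_{(p,l)}=\{f\in P_{3,4}: f(p)=0,\ \tilde f(0,0)=0\}$ and $I_{(p,l)}=\{f\in H_4: a_{00}=a_{10}=a_{01}=a_{20}=a_{11}=a_{30}=0\}$. A configuration is $\mathcal S=\{s_1,\dots,s_n,(p_1,l_1),\dots,(p_m,l_m)\}$ with $s_1,\dots,s_n,p_1,\dots,p_m\in\mathbb P^2(\mathbb R)$ pairwise distinct and $l_j$ real lines with $p_j\in l_j$; $F_{\mathcal S}=\bigcap_iF_{s_i}\cap\bigcap_jF_{(p_j,l_j)}$ and $I_{\mathcal S}=\bigcap_iI_{s_i}\cap\bigcap_jI_{(p_j,l_j)}$. *)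

theory Defs
  imports "HOL-Analysis.Analysis" "HOL-Library.Function_Algebras"
          "HOL-Computational_Algebra.Polynomial"
begin

text \<open>Ternary quartic forms are represented as real-valued functions on real^3
  (vector space structure pointwise). Points of P^2(R) are represented by nonzero
  vectors of real^3; real lines by nonzero normal vectors.\<close>

definition fscale :: "real \<Rightarrow> (real^3 \<Rightarrow> real) \<Rightarrow> (real^3 \<Rightarrow> real)" where
  "fscale c f = (\<lambda>v. c * f v)"

definition fspan :: "(real^3 \<Rightarrow> real) set \<Rightarrow> (real^3 \<Rightarrow> real) set" where
  "fspan = module.span fscale"

definition fdim :: "(real^3 \<Rightarrow> real) set \<Rightarrow> nat" where
  "fdim = vector_space.dim fscale"

definition H4 :: "(real^3 \<Rightarrow> real) set" where
  "H4 = {f. \<exists>c::nat \<Rightarrow> nat \<Rightarrow> real. \<forall>v.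
          f v = (\<Sum>i\<le>4. \<Sum>j\<le>4-i. c i j * (v$1)^i * (v$2)^j * (v$3)^(4-i-j))}"

definition P34 :: "(real^3 \<Rightarrow> real) set" where
  "P34 = {f \<in> H4. \<forall>v. 0 \<le> f v}"

definition same_pt :: "real^3 \<Rightarrow> real^3 \<Rightarrow> bool" where
  "same_pt u v \<longleftrightarrow> (\<exists>c. c \<noteq> 0 \<and> u = c *\<^sub>R v)"

definition zero_set :: "(real^3 \<Rightarrow> real) \<Rightarrow> (real^3) set" where
  "zero_set f = {v. v \<noteq> 0 \<and> f v = 0}"

text \<open>B is the inverse of an invertible linear change of coordinates A sending p to
  (0:0:1); the form in the new coordinates is f(B X).\<close>
definition coords_at :: "real^3 \<Rightarrow> real^3^3 \<Rightarrow> bool" where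
  "coords_at p B \<longleftrightarrow> invertible B \<and> same_pt (B *v vector [0, 0, 1]) p"

definition coords_at_line :: "real^3 \<Rightarrow> real^3 \<Rightarrow> real^3^3 \<Rightarrow> bool" where
  "coords_at_line p l B \<longleftrightarrow> coords_at p B \<and> (\<forall>X. l \<bullet> (B *v X) = 0 \<longleftrightarrow> X$2 = 0)"

definition local_coeffs :: "(real^3 \<Rightarrow> real) \<Rightarrow> real^3^3 \<Rightarrow> (nat \<Rightarrow> nat \<Rightarrow> real) \<Rightarrow> bool" where
  "local_coeffs f B a \<longleftrightarrow> (\<forall>i j. 4 < i + j \<longrightarrow> a i j = 0) \<and>
     (\<forall>x y. f (B *v vector [x, y, 1]) = (\<Sum>i\<le>4. \<Sum>j\<le>4. a i j * x^i * y^j))"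

definition hpart :: "(nat \<Rightarrow> nat \<Rightarrow> real) \<Rightarrow> nat \<Rightarrow> real \<Rightarrow> real \<Rightarrow> real" where
  "hpart a k u w = (\<Sum>i\<le>k. a i (k - i) * u^i * w^(k - i))"

definition hpoly :: "(nat \<Rightarrow> nat \<Rightarrow> real) \<Rightarrow> nat \<Rightarrow> real poly" where
  "hpoly a k = (\<Sum>i\<le>k. monom (a i (k - i)) (k - i))"

definition ord_is :: "(nat \<Rightarrow> nat \<Rightarrow> real) \<Rightarrow> nat \<Rightarrow> bool" where
  "ord_is a k \<longleftrightarrow> (\<forall>i j. i + j < k \<longrightarrow> a i j = 0) \<and> (\<exists>i j. i + j = k \<and> a i j \<noteq> 0)"

definition ord_ge :: "(nat \<Rightarrow> nat \<Rightarrow> real) \<Rightarrow> nat \<Rightarrow> bool" where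
  "ord_ge a k \<longleftrightarrow> (\<forall>i j. i + j < k \<longrightarrow> a i j = 0)"

definition tilde :: "(nat \<Rightarrow> nat \<Rightarrow> real) \<Rightarrow> real \<Rightarrow> real \<Rightarrow> real" where
  "tilde a x y = hpart a 2 1 y + x * hpart a 3 1 y + x^2 * hpart a 4 1 y"

text \<open>First-order real infinitely near points: real directions [u:w], represented by
  nonzero pairs, with f_2(u,w) = 0 (all directions if f_2 = 0).\<close>
definition inp :: "(nat \<Rightarrow> nat \<Rightarrow> real) \<Rightarrow> (real \<times> real) set" where
  "inp a = {(u, w). (u, w) \<noteq> (0, 0) \<and> hpart a 2 u w = 0}"

definition disc :: "(nat \<Rightarrow> nat \<Rightarrow> real) \<Rightarrow> real poly" where
  "disc a = (hpoly a 3)^2 - smult 4 (hpoly a 2 * hpoly a 4)"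

definition F_pt :: "real^3 \<Rightarrow> (real^3 \<Rightarrow> real) set" where
  "F_pt s = {f \<in> P34. f s = 0}"

definition I_pt :: "real^3 \<Rightarrow> (real^3 \<Rightarrow> real) set" where
  "I_pt s = {f \<in> H4. \<exists>B a. coords_at s B \<and> local_coeffs f B a \<and> ord_ge a 2}"

definition F_pl :: "real^3 \<Rightarrow> real^3 \<Rightarrow> (real^3 \<Rightarrow> real) set" where
  "F_pl p l = {f \<in> P34. f p = 0 \<and>
     (\<exists>B a. coords_at_line p l B \<and> local_coeffs f B a \<and> tilde a 0 0 = 0)}"

definition I_pl :: "real^3 \<Rightarrow> real^3 \<Rightarrow> (real^3 \<Rightarrow> real) set" where
  "I_pl p l = {f \<in> H4. \<exists>B a. coords_at_line p l B \<and> local_coeffs f B a \<and>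
     a 0 0 = 0 \<and> a 1 0 = 0 \<and> a 0 1 = 0 \<and> a 2 0 = 0 \<and> a 1 1 = 0 \<and> a 3 0 = 0}"

text \<open>Configuration S = {s_0..s_(n-1), (p_0,l_0)..(p_(m-1),l_(m-1))}.\<close>
definition configuration ::
  "nat \<Rightarrow> (nat \<Rightarrow> real^3) \<Rightarrow> nat \<Rightarrow> (nat \<Rightarrow> real^3) \<Rightarrow> (nat \<Rightarrow> real^3) \<Rightarrow> bool" where
  "configuration n s m p l \<longleftrightarrow>
     (\<forall>i<n. s i \<noteq> 0) \<and> (\<forall>j<m. p j \<noteq> 0) \<and>
     (\<forall>i<n. \<forall>i'<n. i \<noteq> i' \<longrightarrow> \<not> same_pt (s i) (s i')) \<and>
     (\<forall>j<m. \<forall>j'<m. j \<noteq> j' \<longrightarrow> \<not> same_pt (p j) (p j')) \<and>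
     (\<forall>i<n. \<forall>j<m. \<not> same_pt (s i) (p j)) \<and>
     (\<forall>j<m. l j \<noteq> 0 \<and> p j \<bullet> l j = 0)"

definition F_S ::
  "nat \<Rightarrow> (nat \<Rightarrow> real^3) \<Rightarrow> nat \<Rightarrow> (nat \<Rightarrow> real^3) \<Rightarrow> (nat \<Rightarrow> real^3) \<Rightarrow> (real^3 \<Rightarrow> real) set" where
  "F_S n s m p l = {f \<in> P34. (\<forall>i<n. f \<in> F_pt (s i)) \<and> (\<forall>j<m. f \<in> F_pl (p j) (l j))}"

definition I_S ::
  "nat \<Rightarrow> (nat \<Rightarrow> real^3) \<Rightarrow> nat \<Rightarrow> (nat \<Rightarrow> real^3) \<Rightarrow> (nat \<Rightarrow> real^3) \<Rightarrow> (real^3 \<Rightarrow> real) set" where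
  "I_S n s m p l = {f \<in> H4. (\<forall>i<n. f \<in> I_pt (s i)) \<and> (\<forall>j<m. f \<in> I_pl (p j) (l j))}"

end

theory Submission
  imports Defs "HOL-Library.Quadratic_Discriminant"
begin


definition hf :: "(nat \<Rightarrow> nat \<Rightarrow> real) \<Rightarrow> real^3 \<Rightarrow> real" where
  "hf c v = (\<Sum>i\<le>4. \<Sum>j\<le>4-i. c i j * (v$1)^i * (v$2)^j * (v$3)^(4-i-j))"

lemma H4_iff: "g \<in> H4 \<longleftrightarrow> (\<exists>c. g = hf c)"
  unfolding H4_def hf_def by (auto simp: fun_eq_iff)

lemma hf_homog: "hf c (k *\<^sub>R v) = k^4 * hf c v"
proof -
  have hh: "c i j * (k * v$1)^i * (k * v$2)^j * (k * v$3)^(4-i-j) =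
        k^4 * (c i j * (v$1)^i * (v$2)^j * (v$3)^(4-i-j))" if "i \<le> 4" "j \<le> 4 - i" for i j
  proof -
    have e: "k^i * k^j * k^(4-i-j) = k^4" using that
      by (simp add: power_add[symmetric])
    have h: "c i j * (k * v$1)^i * (k * v$2)^j * (k * v$3)^(4-i-j) =
          (k^i * k^j * k^(4-i-j)) * (c i j * (v$1)^i * (v$2)^j * (v$3)^(4-i-j))"
      unfolding power_mult_distrib by (simp only: ac_simps)
    show ?thesis by (simp only: h e)
  qed
  show ?thesis unfolding hf_def sum_distrib_left
    apply (rule sum.cong[OF refl])
    apply (rule sum.cong[OF refl])
    apply (simp only: vector_scaleR_component real_scaleR_def)
    apply (rule hh) by auto
qed

lemma H4_homog: "g \<in> H4 \<Longrightarrow> g (k *\<^sub>R v) = k^4 * g v"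
  using hf_homog H4_iff by metis

lemma H4_zero_at_0: "g \<in> H4 \<Longrightarrow> g 0 = 0"
  using H4_homog[of g 0 0] by simp

lemma H4_cont: "g \<in> H4 \<Longrightarrow> continuous_on UNIV g"
  unfolding H4_iff hf_def by (auto intro!: continuous_intros)

lemma H4_add: "g1 \<in> H4 \<Longrightarrow> g2 \<in> H4 \<Longrightarrow> (g1 + g2) \<in> H4"
proof -
  assume "g1 \<in> H4" "g2 \<in> H4"
  then obtain c1 c2 where "g1 = hf c1" "g2 = hf c2" by (auto simp: H4_iff)
  then have "g1 + g2 = hf (\<lambda>i j. c1 i j + c2 i j)"
    by (simp add: hf_def fun_eq_iff sum.distrib algebra_simps)
  then show ?thesis by (auto simp: H4_iff)
qed

lemma H4_scale: "g \<in> H4 \<Longrightarrow> fscale k g \<in> H4"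
proof -
  assume "g \<in> H4"
  then obtain c where "g = hf c" by (auto simp: H4_iff)
  then have "fscale k g = hf (\<lambda>i j. k * c i j)"
    by (simp add: hf_def fscale_def fun_eq_iff sum_distrib_left algebra_simps)
  then show ?thesis by (auto simp: H4_iff)
qed

lemma H4_0: "(0 :: real^3 \<Rightarrow> real) \<in> H4"
proof -
  have "(0 :: real^3 \<Rightarrow> real) = hf (\<lambda>i j. 0)" by (simp add: hf_def fun_eq_iff)
  then show ?thesis by (auto simp: H4_iff)
qed

lemma vec3_eq: "(u::real^3) = v \<longleftrightarrow> u$1 = v$1 \<and> u$2 = v$2 \<and> u$3 = v$3"
  by (simp add: vec_eq_iff forall_3)

lemma chart_point:
  fixes X :: "real^3" and B :: "real^3^3"
  assumes "X$3 \<noteq> 0"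
  shows "B *v X = X$3 *\<^sub>R (B *v vector [X$1 / X$3, X$2 / X$3, 1])"
proof -
  have "X = X$3 *\<^sub>R (vector [X$1 / X$3, X$2 / X$3, 1] :: real^3)"
    using assms by (simp add: vec3_eq vector_3)
  then show ?thesis by (metis matrix_vector_mult_scaleR)
qed

lemma chart_value:
  fixes X :: "real^3" and B :: "real^3^3"
  assumes "g \<in> H4" "X$3 \<noteq> 0"
  shows "g (B *v X) = (X$3)^4 * g (B *v vector [X$1 / X$3, X$2 / X$3, 1])"
  using chart_point[OF assms(2), of B] H4_homog[OF assms(1)] by simp


section \<open>bivariate polynomials as real poly poly\<close>

definition ev2 :: "real poly poly \<Rightarrow> real \<Rightarrow> real \<Rightarrow> real" where
  "ev2 Q x y = poly (poly Q [:x:]) y"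

definition TD :: "nat \<Rightarrow> real poly poly \<Rightarrow> bool" where
  "TD n Q \<longleftrightarrow> (\<forall>i j. n < i + j \<longrightarrow> coeff (coeff Q i) j = 0)"

lemma ev2_mult: "ev2 (A * B) x y = ev2 A x y * ev2 B x y"
  by (simp add: ev2_def)
lemma ev2_add: "ev2 (A + B) x y = ev2 A x y + ev2 B x y"
  by (simp add: ev2_def)
lemma ev2_power: "ev2 (A ^ k) x y = ev2 A x y ^ k"
  by (simp add: ev2_def poly_power)
lemma ev2_sum: "ev2 (\<Sum>i\<in>S. F i) x y = (\<Sum>i\<in>S. ev2 (F i) x y)"
  by (simp add: ev2_def poly_sum)
lemma ev2_const: "ev2 [:[:c:]:] x y = c"
  by (simp add: ev2_def)
lemma ev2_lin: "ev2 [:[:b3, b2:], [:b1:]:] x y = b1 * x + b2 * y + b3"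
  by (simp add: ev2_def algebra_simps)

lemma TD_mono: "TD m A \<Longrightarrow> m \<le> n \<Longrightarrow> TD n A"
  unfolding TD_def by auto

lemma TD_add: "TD n A \<Longrightarrow> TD n B \<Longrightarrow> TD n (A + B)"
  unfolding TD_def by auto

lemma TD_sum: "finite S \<Longrightarrow> (\<And>i. i \<in> S \<Longrightarrow> TD n (F i)) \<Longrightarrow> TD n (\<Sum>i\<in>S. F i)"
  unfolding TD_def by (auto simp: coeff_sum intro!: sum.neutral)

lemma TD_mult: assumes "TD m A" "TD n B" shows "TD (m + n) (A * B)"
  unfolding TD_def
proof (intro allI impI)
  fix i j assume ij: "m + n < i + j"
  have "coeff (coeff (A * B) i) j =
        (\<Sum>k\<le>i. \<Sum>l\<le>j. coeff (coeff A k) l * coeff (coeff B (i - k)) (j - l))"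
    by (simp add: coeff_mult coeff_sum)
  also have "\<dots> = 0"
  proof (intro sum.neutral ballI)
    fix k l assume k: "k \<in> {..i}" and l: "l \<in> {..j}"
    show "coeff (coeff A k) l * coeff (coeff B (i - k)) (j - l) = 0"
    proof (cases "m < k + l")
      case True then show ?thesis using assms(1) by (simp add: TD_def)
    next
      case False
      then have "n < (i - k) + (j - l)" using ij k l by auto
      then show ?thesis using assms(2) by (simp add: TD_def)
    qed
  qed
  finally show "coeff (coeff (A * B) i) j = 0" .
qed

lemma TD_power: "TD n A \<Longrightarrow> TD (k * n) (A ^ k)"
proof (induction k)
  case 0 then show ?case by (simp add: TD_def coeff_1)
next
  case (Suc k) then show ?case using TD_mult[of n A "k*n" "A^k"] by (simp add: add.commute)
qed

lemma TD_const: "TD 0 [:[:c:]:]"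
  unfolding TD_def by (auto simp: coeff_pCons split: nat.splits)

lemma TD_lin: "TD 1 [:[:b3, b2:], [:b1:]:]"
  unfolding TD_def by (auto simp: coeff_pCons split: nat.splits)

lemma poly_sum_le:
  fixes x :: "'a::{comm_semiring_0,semiring_1}"
  assumes "\<And>i. n < i \<Longrightarrow> coeff p i = 0"
  shows "poly p x = (\<Sum>i\<le>n. coeff p i * x ^ i)"
proof -
  have d: "degree p \<le> n" using assms by (meson degree_le leI)
  have "poly p x = (\<Sum>i\<le>degree p. coeff p i * x ^ i)" by (rule poly_altdef)
  also have "\<dots> = (\<Sum>i\<le>n. coeff p i * x ^ i)"
    by (rule sum.mono_neutral_left) (use d in \<open>auto simp: coeff_eq_0\<close>)
  finally show ?thesis .
qed

lemma ev2_TD4: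
  assumes "TD 4 Q"
  shows "ev2 Q x y = (\<Sum>i\<le>4. \<Sum>j\<le>4. coeff (coeff Q i) j * x^i * y^j)"
proof -
  have c0: "coeff Q i = 0" if "4 < i" for i
    using assms that by (auto simp: TD_def poly_eq_iff)
  have c1: "coeff (coeff Q i) j = 0" if "4 < j" for i j
    using assms that by (auto simp: TD_def)
  have "poly Q [:x:] = (\<Sum>i\<le>4. coeff Q i * [:x:] ^ i)"
    by (rule poly_sum_le) (use c0 in auto)
  then have "ev2 Q x y = (\<Sum>i\<le>4. poly (coeff Q i) y * x ^ i)"
    by (simp add: ev2_def poly_sum algebra_simps)
  also have "\<dots> = (\<Sum>i\<le>4. (\<Sum>j\<le>4. coeff (coeff Q i) j * y ^ j) * x ^ i)"
    by (intro sum.cong refl, subst poly_sum_le[where n=4]) (use c1 in auto)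
  finally show ?thesis by (simp add: sum_distrib_left sum_distrib_right mult_ac)
qed

lemma mv_comp: "((B::real^3^3) *v vector [x, y, 1]) $ k = B$k$1 * x + B$k$2 * y + B$k$3"
  by (simp add: matrix_vector_mult_def sum_3 vector_3)

lemma LC_exists:
  assumes "g \<in> H4"
  shows "\<exists>a. local_coeffs g B a"
proof -
  obtain c where g: "g = hf c" using assms by (auto simp: H4_iff)
  define L where "L k = [:[:B$k$3, B$k$2:], [:B$k$1:]:]" for k :: 3
  define Q where "Q = (\<Sum>i\<le>4. \<Sum>j\<le>4-i. [:[:c i j:]:] * L 1 ^ i * L 2 ^ j * L 3 ^ (4-i-j))"
  have LT: "TD 1 (L k)" for k unfolding L_def by (rule TD_lin)
  have "TD 4 Q" unfolding Q_def
  proof (intro TD_sum finite_atMost)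
    fix i j :: nat assume "i \<in> {..4}" "j \<in> {..4-i}"
    then have e: "0 + i*1 + j*1 + (4-i-j)*1 = (4::nat)" by auto
    show "TD 4 ([:[:c i j:]:] * L 1 ^ i * L 2 ^ j * L 3 ^ (4-i-j))"
      using TD_mult[OF TD_mult[OF TD_mult[OF TD_const TD_power[OF LT]] TD_power[OF LT]] TD_power[OF LT]]
      by (subst e[symmetric]) (simp only:)
  qed
  have ev: "ev2 Q x y = g (B *v vector [x, y, 1])" for x y
    unfolding Q_def g hf_def ev2_sum ev2_mult ev2_power ev2_const L_def ev2_lin mv_comp
    by (simp add: algebra_simps)
  define a where "a i j = coeff (coeff Q i) j" for i j
  have "local_coeffs g B a"
    unfolding local_coeffs_def
  proof (intro conjI allI impI)
    fix i j :: nat assume "4 < i + j" then show "a i j = 0"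
      using \<open>TD 4 Q\<close> by (simp add: a_def TD_def)
  next
    fix x y show "g (B *v vector [x, y, 1]) = (\<Sum>i\<le>4. \<Sum>j\<le>4. a i j * x ^ i * y ^ j)"
      using ev2_TD4[OF \<open>TD 4 Q\<close>, of x y] ev by (simp add: a_def)
  qed
  then show ?thesis by blast
qed


definition Pa :: "(nat \<Rightarrow> nat \<Rightarrow> real) \<Rightarrow> real \<Rightarrow> real \<Rightarrow> real" where
  "Pa a x y = (\<Sum>i\<le>4. \<Sum>j\<le>4. a i j * x^i * y^j)"

definition ra :: "(nat \<times> nat) set \<Rightarrow> (nat \<Rightarrow> nat \<Rightarrow> real) \<Rightarrow> nat \<Rightarrow> nat \<Rightarrow> real" where
  "ra A a i j = (if (i, j) \<in> A then a i j else 0)"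

definition SA :: "(nat \<Rightarrow> nat \<Rightarrow> real) \<Rightarrow> real" where
  "SA a = (\<Sum>i\<le>4. \<Sum>j\<le>4. \<bar>a i j\<bar>)"

lemma SA_nonneg: "0 \<le> SA a" unfolding SA_def by (intro sum_nonneg) auto

lemma Pa_add: "Pa a x y + Pa b x y = Pa (\<lambda>i j. a i j + b i j) x y"
  unfolding Pa_def by (simp add: sum.distrib[symmetric] algebra_simps)

lemma Pa_split: "Pa a x y = Pa (ra A a) x y + Pa (ra (-A) a) x y"
proof -
  have "a = (\<lambda>i j. ra A a i j + ra (-A) a i j)" by (auto simp: ra_def fun_eq_iff)
  then show ?thesis by (metis Pa_add)
qed

lemma Pa_ra_finite:
  assumes "A \<subseteq> {..4} \<times> {..4}"
  shows "Pa (ra A a) x y = (\<Sum>p\<in>A. a (fst p) (snd p) * x^(fst p) * y^(snd p))"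
proof -
  have "Pa (ra A a) x y = (\<Sum>p\<in>{..4::nat} \<times> {..4::nat}. ra A a (fst p) (snd p) * x^(fst p) * y^(snd p))"
    unfolding Pa_def sum.cartesian_product by (simp add: case_prod_beta)
  also have "\<dots> = (\<Sum>p\<in>A. ra A a (fst p) (snd p) * x^(fst p) * y^(snd p))"
    by (rule sum.mono_neutral_right) (use assms in \<open>auto simp: ra_def\<close>)
  also have "\<dots> = (\<Sum>p\<in>A. a (fst p) (snd p) * x^(fst p) * y^(snd p))"
    by (rule sum.cong) (auto simp: ra_def)
  finally show ?thesis .
qed

lemma UB:
  assumes "\<And>i j. i \<le> 4 \<Longrightarrow> j \<le> 4 \<Longrightarrow> a i j \<noteq> 0 \<Longrightarrow> \<bar>x^i * y^j\<bar> \<le> r" "0 \<le> r"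
  shows "\<bar>Pa a x y\<bar> \<le> SA a * r"
proof -
  have "\<bar>Pa a x y\<bar> \<le> (\<Sum>i\<le>4. \<Sum>j\<le>4. \<bar>a i j * x^i * y^j\<bar>)"
    unfolding Pa_def by (rule order_trans[OF sum_abs sum_mono]) (rule sum_abs)
  also have "\<dots> \<le> (\<Sum>i\<le>4. \<Sum>j\<le>4. \<bar>a i j\<bar> * r)"
  proof (intro sum_mono)
    fix i j assume "i \<in> {..4::nat}" "j \<in> {..4::nat}"
    then show "\<bar>a i j * x^i * y^j\<bar> \<le> \<bar>a i j\<bar> * r"
      using assms(1)[of i j] by (cases "a i j = 0") (auto simp: abs_mult mult_left_mono)
  qed
  also have "\<dots> = SA a * r" unfolding SA_def by (simp add: sum_distrib_right)
  finally show ?thesis .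
qed

lemma ra_nz: "ra A a i j \<noteq> 0 \<Longrightarrow> (i, j) \<in> A \<and> a i j \<noteq> 0"
  unfolding ra_def by (auto split: if_splits)

section \<open>monomial bounds\<close>

lemma pow_dec: "\<bar>t::real\<bar> \<le> 1 \<Longrightarrow> m \<le> k \<Longrightarrow> \<bar>t\<bar>^k \<le> \<bar>t\<bar>^m"
  by (rule power_decreasing) auto

lemma amgm: "(x::real)^2 * \<bar>y\<bar> \<le> x^4 + y^2"
proof -
  have "0 \<le> (x^2 - \<bar>y\<bar>)^2" by simp
  then have "2 * (x^2 * \<bar>y\<bar>) \<le> (x^2)^2 + y^2" by (simp add: power2_eq_square algebra_simps)
  then have "2 * (x^2 * \<bar>y\<bar>) \<le> x^4 + y^2" by (simp add: power_mult[symmetric])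
  moreover have "0 \<le> x^2 * \<bar>y\<bar>" by simp
  ultimately show ?thesis by linarith
qed

lemma amgm2: "\<bar>x::real\<bar> * \<bar>y\<bar> \<le> x^2 + y^2"
proof -
  have "0 \<le> (\<bar>x\<bar> - \<bar>y\<bar>)^2" by simp
  then have "2 * (\<bar>x\<bar> * \<bar>y\<bar>) \<le> x^2 + y^2" by (simp add: power2_eq_square algebra_simps)
  moreover have "0 \<le> \<bar>x\<bar> * \<bar>y\<bar>" by simp
  ultimately show ?thesis by linarith
qed

lemma M1:
  fixes x y :: real
  assumes "\<bar>x\<bar> \<le> 1" "\<bar>y\<bar> \<le> 1" "2 \<le> i + j"
  shows "\<bar>x^i * y^j\<bar> \<le> x^2 + y^2"
proof -
  have ax: "\<bar>x\<bar>^k \<le> 1" "\<bar>y\<bar>^k \<le> 1" for k using assms by (auto intro: power_le_one)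
  have e: "\<bar>x^i * y^j\<bar> = \<bar>x\<bar>^i * \<bar>y\<bar>^j" by (simp add: abs_mult power_abs)
  consider "2 \<le> i" | "2 \<le> j" | "i = 1" "j = 1" using assms by linarith
  then show ?thesis
  proof cases
    case 1
    have "\<bar>x\<bar>^i * \<bar>y\<bar>^j \<le> \<bar>x\<bar>^i" using ax(2)[of j] by (simp add: mult_left_le)
    also have "\<dots> \<le> \<bar>x\<bar>^2" using pow_dec[OF assms(1) 1] .
    also have "\<dots> \<le> x^2 + y^2" by simp
    finally show ?thesis using e by simp
  next
    case 2
    have "\<bar>x\<bar>^i * \<bar>y\<bar>^j \<le> \<bar>y\<bar>^j" using ax(1)[of i] by (intro mult_left_le_one_le) auto
    also have "\<dots> \<le> \<bar>y\<bar>^2" using pow_dec[OF assms(2) 2] .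
    also have "\<dots> \<le> x^2 + y^2" by simp
    finally show ?thesis using e by simp
  next
    case 3 then show ?thesis using e amgm2[of x y] by simp
  qed
qed

lemma M2:
  fixes x y :: real
  assumes "\<bar>x\<bar> \<le> e" "\<bar>y\<bar> \<le> e" "e \<le> 1" "3 \<le> i + j"
  shows "\<bar>x^i * y^j\<bar> \<le> e * (x^2 + y^2)"
proof -
  have x1: "\<bar>x\<bar> \<le> 1" and y1: "\<bar>y\<bar> \<le> 1" using assms by auto
  have ax: "\<bar>x\<bar>^k \<le> 1" "\<bar>y\<bar>^k \<le> 1" for k using x1 y1 by (auto intro: power_le_one)
  have e: "\<bar>x^i * y^j\<bar> = \<bar>x\<bar>^i * \<bar>y\<bar>^j" by (simp add: abs_mult power_abs)
  have x2: "0 \<le> x^2" "0 \<le> y^2" by auto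
  consider "3 \<le> i" | "3 \<le> j" | "i = 2" "1 \<le> j" | "i = 1" "2 \<le> j" using assms by linarith
  then show ?thesis
  proof cases
    case 1
    have "\<bar>x\<bar>^i * \<bar>y\<bar>^j \<le> \<bar>x\<bar>^i" using ax(2)[of j] by (simp add: mult_left_le)
    also have "\<dots> \<le> \<bar>x\<bar>^3" using pow_dec[OF x1 1] .
    also have "\<dots> = \<bar>x\<bar> * x^2" by (simp add: power3_eq_cube power2_eq_square abs_mult)
    also have "\<dots> \<le> e * x^2" using assms(1) by (simp add: mult_right_mono)
    finally have "\<bar>x^i * y^j\<bar> \<le> e * x^2" using e by simp
    moreover have "e * x^2 \<le> e * (x^2 + y^2)" using assms by (intro mult_left_mono) auto
    ultimately show ?thesis by linarith
  next
    case 2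
    have "\<bar>x\<bar>^i * \<bar>y\<bar>^j \<le> \<bar>y\<bar>^j" using ax(1)[of i] by (intro mult_left_le_one_le) auto
    also have "\<dots> \<le> \<bar>y\<bar>^3" using pow_dec[OF y1 2] .
    also have "\<dots> = \<bar>y\<bar> * y^2" by (simp add: power3_eq_cube power2_eq_square abs_mult)
    also have "\<dots> \<le> e * y^2" using assms(2) by (simp add: mult_right_mono)
    finally have "\<bar>x^i * y^j\<bar> \<le> e * y^2" using e by simp
    moreover have "e * y^2 \<le> e * (x^2 + y^2)" using assms by (intro mult_left_mono) auto
    ultimately show ?thesis by linarith
  next
    case 3
    have "\<bar>x\<bar>^i * \<bar>y\<bar>^j \<le> x^2 * \<bar>y\<bar>" using 3 pow_dec[OF y1 3(2)] by (simp add: mult_left_mono power_abs)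
    also have "\<dots> \<le> x^2 * e" using assms(2) by (simp add: mult_left_mono)
    finally have "\<bar>x^i * y^j\<bar> \<le> e * x^2" using e by (simp add: mult.commute)
    moreover have "e * x^2 \<le> e * (x^2 + y^2)" using assms by (intro mult_left_mono) auto
    ultimately show ?thesis by linarith
  next
    case 4
    have "\<bar>x\<bar>^i * \<bar>y\<bar>^j \<le> \<bar>x\<bar> * y^2" using 4 pow_dec[OF y1 4(2)] by (simp add: mult_left_mono power_abs)
    also have "\<dots> \<le> e * y^2" using assms(1) by (simp add: mult_right_mono)
    finally have "\<bar>x^i * y^j\<bar> \<le> e * y^2" using e by simp
    moreover have "e * y^2 \<le> e * (x^2 + y^2)" using assms by (intro mult_left_mono) auto
    ultimately show ?thesis by linarith
  qed
qed

lemma M3: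
  fixes x y :: real
  assumes "\<bar>x\<bar> \<le> 1" "\<bar>y\<bar> \<le> 1" "4 \<le> i + 2 * j"
  shows "\<bar>x^i * y^j\<bar> \<le> x^4 + y^2"
proof -
  have ax: "\<bar>x\<bar>^k \<le> 1" "\<bar>y\<bar>^k \<le> 1" for k using assms by (auto intro: power_le_one)
  have e: "\<bar>x^i * y^j\<bar> = \<bar>x\<bar>^i * \<bar>y\<bar>^j" by (simp add: abs_mult power_abs)
  have x2: "0 \<le> x^4" "0 \<le> y^2" by auto
  consider "2 \<le> j" | "j = 1" "2 \<le> i" | "j = 0" "4 \<le> i" using assms by linarith
  then show ?thesis
  proof cases
    case 1
    have "\<bar>x\<bar>^i * \<bar>y\<bar>^j \<le> \<bar>y\<bar>^j" using ax(1)[of i] by (intro mult_left_le_one_le) auto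
    also have "\<dots> \<le> \<bar>y\<bar>^2" using pow_dec[OF assms(2) 1] .
    finally have "\<bar>x\<bar>^i * \<bar>y\<bar>^j \<le> y^2" by (simp add: power_abs)
    then show ?thesis using e x2(1) by linarith
  next
    case 2
    have "\<bar>x\<bar>^i * \<bar>y\<bar>^j \<le> x^2 * \<bar>y\<bar>" using 2 pow_dec[OF assms(1) 2(2)] by (simp add: mult_right_mono power_abs)
    then show ?thesis using e amgm[of x y] by simp
  next
    case 3
    have "\<bar>x\<bar>^i * \<bar>y\<bar>^j \<le> \<bar>x\<bar>^4" using 3 pow_dec[OF assms(1) 3(2)] by simp
    then have "\<bar>x\<bar>^i * \<bar>y\<bar>^j \<le> x^4" by (simp add: power_abs)
    then show ?thesis using e x2(2) by linarith
  qed
qed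

lemma M4:
  fixes x y :: real
  assumes "\<bar>x\<bar> \<le> e" "\<bar>y\<bar> \<le> e" "e \<le> 1" "5 \<le> i + 2 * j" "i + j \<le> 4"
  shows "\<bar>x^i * y^j\<bar> \<le> e * (x^4 + y^2)"
proof -
  have x1: "\<bar>x\<bar> \<le> 1" and y1: "\<bar>y\<bar> \<le> 1" using assms by auto
  have ax: "\<bar>x\<bar>^k \<le> 1" "\<bar>y\<bar>^k \<le> 1" for k using x1 y1 by (auto intro: power_le_one)
  have e: "\<bar>x^i * y^j\<bar> = \<bar>x\<bar>^i * \<bar>y\<bar>^j" by (simp add: abs_mult power_abs)
  have x2: "0 \<le> x^4" "0 \<le> y^2" by auto
  have e0: "0 \<le> e" using assms(1) by linarith
  consider "3 \<le> j" | "j = 2" "1 \<le> i" | "j = 1" "3 \<le> i" using assms by linarith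
  then show ?thesis
  proof cases
    case 1
    have "\<bar>x\<bar>^i * \<bar>y\<bar>^j \<le> \<bar>y\<bar>^j" using ax(1)[of i] by (intro mult_left_le_one_le) auto
    also have "\<dots> \<le> \<bar>y\<bar>^3" using pow_dec[OF y1 1] .
    also have "\<dots> = \<bar>y\<bar> * y^2" by (simp add: power3_eq_cube power2_eq_square abs_mult)
    also have "\<dots> \<le> e * y^2" using assms(2) by (simp add: mult_right_mono)
    finally have "\<bar>x^i * y^j\<bar> \<le> e * y^2" using e by simp
    moreover have "e * y^2 \<le> e * (x^4 + y^2)" using e0 by (intro mult_left_mono) auto
    ultimately show ?thesis by linarith
  next
    case 2
    have "\<bar>x\<bar>^i * \<bar>y\<bar>^j \<le> \<bar>x\<bar> * y^2" using 2 pow_dec[OF x1 2(2)] by (simp add: mult_right_mono power_abs)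
    also have "\<dots> \<le> e * y^2" using assms(1) by (simp add: mult_right_mono)
    finally have "\<bar>x^i * y^j\<bar> \<le> e * y^2" using e by simp
    moreover have "e * y^2 \<le> e * (x^4 + y^2)" using e0 by (intro mult_left_mono) auto
    ultimately show ?thesis by linarith
  next
    case 3
    have "\<bar>x\<bar>^i * \<bar>y\<bar>^j \<le> \<bar>x\<bar>^3 * \<bar>y\<bar>" using 3 pow_dec[OF x1 3(2)] by (simp add: mult_right_mono)
    also have "\<dots> = \<bar>x\<bar> * (x^2 * \<bar>y\<bar>)" by (simp add: power3_eq_cube power2_eq_square abs_mult)
    also have "\<dots> \<le> e * (x^4 + y^2)" using assms(1) amgm[of x y] e0
      by (meson abs_ge_zero mult_mono zero_le_mult_iff zero_le_power2)
    finally show ?thesis using e by simp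
  qed
qed

section \<open>limit lemmas\<close>

lemma small_pos:
  fixes c K :: real
  assumes "0 < c" "0 < \<delta>"
  obtains t where "0 < t" "t \<le> \<delta>" "t \<le> 1" "\<bar>K\<bar> * t < c"
proof -
  define t where "t = min (min \<delta> 1) (c / (2 * (\<bar>K\<bar> + 1)))"
  have t0: "0 < t" using assms by (simp add: t_def)
  have "t \<le> c / (2 * (\<bar>K\<bar> + 1))" by (simp add: t_def)
  then have "(\<bar>K\<bar> + 1) * t \<le> c / 2" by (simp add: field_simps)
  then have "\<bar>K\<bar> * t + t \<le> c / 2" by (simp add: algebra_simps)
  then have "\<bar>K\<bar> * t < c" using t0 assms by linarith
  show ?thesis by (rule that[of t]) (use t0 \<open>\<bar>K\<bar> * t < c\<close> in \<open>auto simp: t_def\<close>)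
qed

lemma LIMz:
  fixes c :: real and r :: "real \<Rightarrow> real"
  assumes d: "0 < \<delta>"
    and h1: "\<And>t. 0 < \<bar>t\<bar> \<Longrightarrow> \<bar>t\<bar> \<le> \<delta> \<Longrightarrow> \<bar>c * t^n + r t\<bar> \<le> K * \<bar>t\<bar>^(n+1)"
    and h2: "\<And>t. 0 < \<bar>t\<bar> \<Longrightarrow> \<bar>t\<bar> \<le> \<delta> \<Longrightarrow> \<bar>r t\<bar> \<le> S * \<bar>t\<bar>^(n+1)"
  shows "c = 0"
proof (rule ccontr)
  assume "c \<noteq> 0"
  then have c0: "0 < \<bar>c\<bar>" by simp
  obtain t where t: "0 < t" "t \<le> \<delta>" "\<bar>K + S\<bar> * t < \<bar>c\<bar>" using small_pos[OF c0 d] by metis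
  have "\<bar>c * t^n\<bar> \<le> \<bar>c * t^n + r t\<bar> + \<bar>r t\<bar>" by linarith
  also have "\<dots> \<le> (K + S) * t^(n+1)" using h1[of t] h2[of t] t by (simp add: algebra_simps)
  finally have "\<bar>c\<bar> * t^n \<le> ((K + S) * t) * t^n" using t by (simp add: abs_mult algebra_simps)
  then have "\<bar>c\<bar> \<le> (K + S) * t" using t by simp
  moreover have "(K + S) * t \<le> \<bar>K + S\<bar> * t" using t by (intro mult_right_mono) auto
  ultimately show False using t by linarith
qed

lemma LIMp:
  fixes c :: real and r :: "real \<Rightarrow> real"
  assumes d: "0 < \<delta>"
    and h1: "\<And>t. 0 < t \<Longrightarrow> t \<le> \<delta> \<Longrightarrow> 0 \<le> c * t^n + r t"
    and h2: "\<And>t. 0 < t \<Longrightarrow> t \<le> \<delta> \<Longrightarrow> \<bar>r t\<bar> \<le> S * t^(n+1)"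
  shows "0 \<le> c"
proof (rule ccontr)
  assume "\<not> 0 \<le> c"
  then have c0: "0 < -c" by simp
  obtain t where t: "0 < t" "t \<le> \<delta>" "\<bar>S\<bar> * t < -c" using small_pos[OF c0 d] by metis
  have "-c * t^n \<le> r t" using h1[of t] t by simp
  also have "\<dots> \<le> (S * t) * t^n" using h2[of t] t by (simp add: algebra_simps)
  finally have "-c * t^n \<le> (S * t) * t^n" by simp
  then have "-c \<le> S * t" by (rule mult_right_le_imp_le) (use t in auto)
  moreover have "S * t \<le> \<bar>S\<bar> * t" using t by (intro mult_right_mono) auto
  ultimately show False using t by linarith
qed

lemma LIModd:
  fixes c :: real and r :: "real \<Rightarrow> real"
  assumes n: "odd n" and d: "0 < \<delta>"
    and h1: "\<And>t. 0 < \<bar>t\<bar> \<Longrightarrow> \<bar>t\<bar> \<le> \<delta> \<Longrightarrow> 0 \<le> c * t^n + r t"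
    and h2: "\<And>t. 0 < \<bar>t\<bar> \<Longrightarrow> \<bar>t\<bar> \<le> \<delta> \<Longrightarrow> \<bar>r t\<bar> \<le> S * \<bar>t\<bar>^(n+1)"
  shows "c = 0"
proof -
  have "0 \<le> c"
  proof (rule LIMp[OF d, of c n r S])
    fix t :: real assume "0 < t" "t \<le> \<delta>"
    then show "0 \<le> c * t ^ n + r t" using h1[of t] by simp
  next
    fix t :: real assume "0 < t" "t \<le> \<delta>"
    then show "\<bar>r t\<bar> \<le> S * t ^ (n + 1)" using h2[of t] by simp
  qed
  moreover have "0 \<le> -c"
  proof (rule LIMp[OF d, of "-c" n "\<lambda>t. r (-t)" S])
    fix t :: real assume "0 < t" "t \<le> \<delta>"
    then show "0 \<le> - c * t ^ n + r (- t)" using h1[of "-t"] n by (simp add: power_minus_odd)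
  next
    fix t :: real assume "0 < t" "t \<le> \<delta>"
    then show "\<bar>r (- t)\<bar> \<le> S * t ^ (n + 1)" using h2[of "-t"] by simp
  qed
  ultimately show ?thesis by simp
qed


definition wf4 :: "(nat \<Rightarrow> nat \<Rightarrow> real) \<Rightarrow> bool" where
  "wf4 a \<longleftrightarrow> (\<forall>i j. 4 < i + j \<longrightarrow> a i j = 0)"

definition lowpl :: "(nat \<Rightarrow> nat \<Rightarrow> real) \<Rightarrow> bool" where
  "lowpl a \<longleftrightarrow> a 0 0 = 0 \<and> a 1 0 = 0 \<and> a 0 1 = 0 \<and> a 2 0 = 0 \<and> a 1 1 = 0 \<and> a 3 0 = 0"

lemma Pa00: "Pa a 0 0 = a 0 0" by (simp add: Pa_def eval_nat_numeral atMost_Suc)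

lemma E1: "Pa a x y = a 1 0 * x + a 0 1 * y + Pa (ra (-{(1,0),(0,1)}) a) x y"
  using Pa_split[of a x y "{(1,0),(0,1)}"] by (subst (asm) Pa_ra_finite) auto
lemma E2: "Pa a x y = a 2 0 * x^2 + a 1 1 * x * y + a 0 2 * y^2 + Pa (ra (-{(2,0),(1,1),(0,2)}) a) x y"
  using Pa_split[of a x y "{(2,0),(1,1),(0,2)}"] by (subst (asm) Pa_ra_finite) auto
lemma E3: "Pa a x y = a 1 1 * x * y + a 3 0 * x^3 + Pa (ra (-{(1,1),(3,0)}) a) x y"
  using Pa_split[of a x y "{(1,1),(3,0)}"] by (subst (asm) Pa_ra_finite) auto
lemma E4: "Pa a x y = a 4 0 * x^4 + a 2 1 * x^2 * y + a 0 2 * y^2 + Pa (ra (-{(4,0),(2,1),(0,2)}) a) x y"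
  using Pa_split[of a x y "{(4,0),(2,1),(0,2)}"] by (subst (asm) Pa_ra_finite) auto

lemma cls1: "(i::nat) + j < 2 \<Longrightarrow> (i = 0 \<and> j = 0) \<or> (i = 1 \<and> j = 0) \<or> (i = 0 \<and> j = 1)" by presburger
lemma cls2: "(i::nat) + j < 3 \<Longrightarrow> (i = 0 \<and> j = 0) \<or> (i = 1 \<and> j = 0) \<or> (i = 0 \<and> j = 1)
   \<or> (i = 2 \<and> j = 0) \<or> (i = 1 \<and> j = 1) \<or> (i = 0 \<and> j = 2)" by presburger
lemma cls3: "(i::nat) + 2 * j < 4 \<Longrightarrow> (i = 0 \<and> j = 0) \<or> (i = 1 \<and> j = 0) \<or> (i = 0 \<and> j = 1)
   \<or> (i = 2 \<and> j = 0) \<or> (i = 1 \<and> j = 1) \<or> (i = 3 \<and> j = 0)" by presburger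
lemma cls4: "(i::nat) + 2 * j < 5 \<Longrightarrow> (i = 0 \<and> j = 0) \<or> (i = 1 \<and> j = 0) \<or> (i = 0 \<and> j = 1)
   \<or> (i = 2 \<and> j = 0) \<or> (i = 1 \<and> j = 1) \<or> (i = 3 \<and> j = 0) \<or> (i = 4 \<and> j = 0) \<or> (i = 2 \<and> j = 1)
   \<or> (i = 0 \<and> j = 2)" by presburger

lemma R1b:
  assumes "a 0 0 = 0" "\<bar>x\<bar> \<le> 1" "\<bar>y\<bar> \<le> 1"
  shows "\<bar>Pa (ra (-{(1,0),(0,1)}) a) x y\<bar> \<le> SA (ra (-{(1,0),(0,1)}) a) * (x^2 + y^2)"
proof (rule UB)
  fix i j assume "ra (-{(1,0),(0,1)}) a i j \<noteq> 0"
  then have "(i,j) \<notin> {(1,0),(0,1)}" "a i j \<noteq> 0" by (auto dest: ra_nz)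
  then have "2 \<le> i + j" using assms(1) cls1[of i j] by fastforce
  then show "\<bar>x^i * y^j\<bar> \<le> x^2 + y^2" using M1 assms by blast
qed simp

lemma R2b:
  assumes "a 0 0 = 0" "a 1 0 = 0" "a 0 1 = 0" "\<bar>x\<bar> \<le> e" "\<bar>y\<bar> \<le> e" "e \<le> 1"
  shows "\<bar>Pa (ra (-{(2,0),(1,1),(0,2)}) a) x y\<bar> \<le> SA (ra (-{(2,0),(1,1),(0,2)}) a) * (e * (x^2 + y^2))"
proof (rule UB)
  fix i j assume "ra (-{(2,0),(1,1),(0,2)}) a i j \<noteq> 0"
  then have "(i,j) \<notin> {(2,0),(1,1),(0,2)}" "a i j \<noteq> 0" by (auto dest: ra_nz)
  then have "3 \<le> i + j" using assms(1-3) cls2[of i j] by fastforce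
  then show "\<bar>x^i * y^j\<bar> \<le> e * (x^2 + y^2)" using M2 assms by blast
next
  show "0 \<le> e * (x^2 + y^2)" using assms by (intro mult_nonneg_nonneg) auto
qed

lemma R3b:
  assumes "a 0 0 = 0" "a 1 0 = 0" "a 0 1 = 0" "a 2 0 = 0" "\<bar>x\<bar> \<le> 1" "\<bar>y\<bar> \<le> 1"
  shows "\<bar>Pa (ra (-{(1,1),(3,0)}) a) x y\<bar> \<le> SA (ra (-{(1,1),(3,0)}) a) * (x^4 + y^2)"
proof (rule UB)
  fix i j assume "ra (-{(1,1),(3,0)}) a i j \<noteq> 0"
  then have "(i,j) \<notin> {(1,1),(3,0)}" "a i j \<noteq> 0" by (auto dest: ra_nz)
  then have "4 \<le> i + 2 * j" using assms(1-4) cls3[of i j] by fastforce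
  then show "\<bar>x^i * y^j\<bar> \<le> x^4 + y^2" using M3 assms by blast
qed simp

lemma R4b:
  assumes wf: "wf4 a" and "lowpl a" "\<bar>x\<bar> \<le> e" "\<bar>y\<bar> \<le> e" "e \<le> 1"
  shows "\<bar>Pa (ra (-{(4,0),(2,1),(0,2)}) a) x y\<bar> \<le> SA (ra (-{(4,0),(2,1),(0,2)}) a) * (e * (x^4 + y^2))"
proof (rule UB)
  fix i j assume "ra (-{(4,0),(2,1),(0,2)}) a i j \<noteq> 0"
  then have "(i,j) \<notin> {(4,0),(2,1),(0,2)}" "a i j \<noteq> 0" by (auto dest: ra_nz)
  moreover have "i + j \<le> 4" using \<open>a i j \<noteq> 0\<close> wf unfolding wf4_def by (meson not_le)
  ultimately have "5 \<le> i + 2 * j" "i + j \<le> 4" using assms(2) cls4[of i j] unfolding lowpl_def by fastforce+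
  then show "\<bar>x^i * y^j\<bar> \<le> e * (x^4 + y^2)" using M4 assms by blast
next
  show "0 \<le> e * (x^4 + y^2)" using assms by (intro mult_nonneg_nonneg) auto
qed

lemma bound_pt:
  assumes "a 0 0 = 0" "a 1 0 = 0" "a 0 1 = 0" "\<bar>x\<bar> \<le> 1" "\<bar>y\<bar> \<le> 1"
  shows "\<bar>Pa a x y\<bar> \<le> SA a * (x^2 + y^2)"
proof (rule UB)
  fix i j assume "a i j \<noteq> 0"
  then have "2 \<le> i + j" using assms(1-3) cls1[of i j] by fastforce
  then show "\<bar>x^i * y^j\<bar> \<le> x^2 + y^2" using M1 assms by blast
qed simp

lemma bound_pl:
  assumes "lowpl a" "\<bar>x\<bar> \<le> 1" "\<bar>y\<bar> \<le> 1"
  shows "\<bar>Pa a x y\<bar> \<le> SA a * (x^4 + y^2)"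
proof (rule UB)
  fix i j assume "a i j \<noteq> 0"
  then have "4 \<le> i + 2 * j" using assms(1) cls3[of i j] unfolding lowpl_def by fastforce
  then show "\<bar>x^i * y^j\<bar> \<le> x^4 + y^2" using M3 assms by blast
qed simp

lemma coeff_pt_nonneg:
  assumes nn: "\<And>x y. 0 \<le> Pa a x y" and z: "a 0 0 = 0"
  shows "a 1 0 = 0 \<and> a 0 1 = 0"
proof
  let ?R = "ra (-{(1,0),(0,1)}) a"
  show "a 1 0 = 0"
  proof (rule LIModd[of 1 1 "a 1 0" "\<lambda>t. Pa ?R t 0" "SA ?R"])
    fix t :: real assume "0 < \<bar>t\<bar>" "\<bar>t\<bar> \<le> 1"
    show "0 \<le> a 1 0 * t ^ 1 + Pa ?R t 0" using nn[of t 0] E1[of a t 0] by simp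
    show "\<bar>Pa ?R t 0\<bar> \<le> SA ?R * \<bar>t\<bar> ^ (1 + 1)" using R1b[of a t 0] z \<open>\<bar>t\<bar> \<le> 1\<close> by (simp add: power2_eq_square)
  qed auto
  show "a 0 1 = 0"
  proof (rule LIModd[of 1 1 "a 0 1" "\<lambda>t. Pa ?R 0 t" "SA ?R"])
    fix t :: real assume "0 < \<bar>t\<bar>" "\<bar>t\<bar> \<le> 1"
    show "0 \<le> a 0 1 * t ^ 1 + Pa ?R 0 t" using nn[of 0 t] E1[of a 0 t] by simp
    show "\<bar>Pa ?R 0 t\<bar> \<le> SA ?R * \<bar>t\<bar> ^ (1 + 1)" using R1b[of a 0 t] z \<open>\<bar>t\<bar> \<le> 1\<close> by (simp add: power2_eq_square)
  qed auto
qed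

lemma coeff_pl_nonneg:
  assumes nn: "\<And>x y. 0 \<le> Pa a x y" and z: "a 0 0 = 0" "a 1 0 = 0" "a 0 1 = 0" "a 2 0 = 0"
  shows "a 3 0 = 0 \<and> a 1 1 = 0"
proof -
  let ?R = "ra (-{(1,1),(3,0)}) a"
  have a30: "a 3 0 = 0"
  proof (rule LIModd[of 3 1 "a 3 0" "\<lambda>t. Pa ?R t 0" "SA ?R"])
    fix t :: real assume "0 < \<bar>t\<bar>" "\<bar>t\<bar> \<le> 1"
    show "0 \<le> a 3 0 * t ^ 3 + Pa ?R t 0" using nn[of t 0] E3[of a t 0] by simp
    have "\<bar>Pa ?R t 0\<bar> \<le> SA ?R * (t^4 + 0^2)" using R3b[OF z \<open>\<bar>t\<bar> \<le> 1\<close>, of 0] by simp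
    then show "\<bar>Pa ?R t 0\<bar> \<le> SA ?R * \<bar>t\<bar> ^ (3 + 1)" by simp
  qed auto
  have "a 1 1 + a 3 0 = 0"
  proof (rule LIModd[of 3 1 "a 1 1 + a 3 0" "\<lambda>t. Pa ?R t (t^2)" "2 * SA ?R"])
    fix t :: real assume t: "0 < \<bar>t\<bar>" "\<bar>t\<bar> \<le> 1"
    show "0 \<le> (a 1 1 + a 3 0) * t ^ 3 + Pa ?R t (t^2)" using nn[of t "t^2"] E3[of a t "t^2"]
      by (simp add: algebra_simps power2_eq_square power3_eq_cube)
    have t2: "\<bar>t^2\<bar> \<le> 1" using t by (simp add: abs_square_le_1)
    have "\<bar>Pa ?R t (t^2)\<bar> \<le> SA ?R * (t^4 + (t^2)^2)" using R3b[OF z \<open>\<bar>t\<bar> \<le> 1\<close> t2] by simp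
    also have "\<dots> = 2 * SA ?R * \<bar>t\<bar> ^ (3 + 1)" by (simp add: power_abs[symmetric] power_mult[symmetric])
    finally show "\<bar>Pa ?R t (t^2)\<bar> \<le> 2 * SA ?R * \<bar>t\<bar> ^ (3 + 1)" .
  qed auto
  then show ?thesis using a30 by simp
qed


lemma abs_pow4_le: "\<bar>t::real\<bar> \<le> 1 \<Longrightarrow> t^4 \<le> \<bar>t\<bar>^n \<Longrightarrow> True" by simp

lemma t4_le: assumes "\<bar>t::real\<bar> \<le> 1" "n \<le> 4" shows "t^4 \<le> \<bar>t\<bar>^n"
proof -
  have "t^4 = \<bar>t\<bar>^4" by simp
  also have "\<dots> \<le> \<bar>t\<bar>^n" using pow_dec[OF assms(1) assms(2)] .
  finally show ?thesis .
qed

lemma coeff_pt_bound: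
  assumes d: "0 < \<delta>" and b: "\<And>x y. \<bar>x\<bar> \<le> \<delta> \<Longrightarrow> \<bar>y\<bar> \<le> \<delta> \<Longrightarrow> \<bar>Pa a x y\<bar> \<le> K * (x^2 + y^2)"
  shows "a 0 0 = 0 \<and> a 1 0 = 0 \<and> a 0 1 = 0"
proof -
  have z: "a 0 0 = 0" using b[of 0 0] d by (simp add: Pa00)
  let ?R = "ra (-{(1,0),(0,1)}) a"
  have d1: "0 < min \<delta> 1" using d by simp
  have "a 1 0 = 0"
  proof (rule LIMz[OF d1, of "a 1 0" 1 "\<lambda>t. Pa ?R t 0" K "SA ?R"])
    fix t :: real assume t: "0 < \<bar>t\<bar>" "\<bar>t\<bar> \<le> min \<delta> 1"
    show "\<bar>a 1 0 * t ^ 1 + Pa ?R t 0\<bar> \<le> K * \<bar>t\<bar> ^ (1 + 1)" using b[of t 0] E1[of a t 0] t d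
      by (simp add: power2_eq_square)
    show "\<bar>Pa ?R t 0\<bar> \<le> SA ?R * \<bar>t\<bar> ^ (1 + 1)" using R1b[of a t 0] z t by (simp add: power2_eq_square)
  qed
  moreover have "a 0 1 = 0"
  proof (rule LIMz[OF d1, of "a 0 1" 1 "\<lambda>t. Pa ?R 0 t" K "SA ?R"])
    fix t :: real assume t: "0 < \<bar>t\<bar>" "\<bar>t\<bar> \<le> min \<delta> 1"
    show "\<bar>a 0 1 * t ^ 1 + Pa ?R 0 t\<bar> \<le> K * \<bar>t\<bar> ^ (1 + 1)" using b[of 0 t] E1[of a 0 t] t d
      by (simp add: power2_eq_square)
    show "\<bar>Pa ?R 0 t\<bar> \<le> SA ?R * \<bar>t\<bar> ^ (1 + 1)" using R1b[of a 0 t] z t by (simp add: power2_eq_square)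
  qed
  ultimately show ?thesis using z by simp
qed

lemma coeff_pl_bound:
  assumes d: "0 < \<delta>" and b: "\<And>x y. \<bar>x\<bar> \<le> \<delta> \<Longrightarrow> \<bar>y\<bar> \<le> \<delta> \<Longrightarrow> \<bar>Pa a x y\<bar> \<le> K * (x^4 + y^2)"
  shows "lowpl a"
proof -
  have d1: "0 < min \<delta> 1" using d by simp
  have bx: "\<bar>Pa a t 0\<bar> \<le> \<bar>K\<bar> * \<bar>t\<bar>^n" if "\<bar>t\<bar> \<le> min \<delta> 1" "n \<le> 4" for t n
  proof -
    have "\<bar>Pa a t 0\<bar> \<le> K * t^4" using b[of t 0] that d by simp
    also have "\<dots> \<le> \<bar>K\<bar> * t^4" by (simp add: mult_right_mono)
    also have "\<dots> \<le> \<bar>K\<bar> * \<bar>t\<bar>^n" using t4_le[of t n] that by (simp add: mult_left_mono)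
    finally show ?thesis .
  qed
  have z: "a 0 0 = 0" using b[of 0 0] d by (simp add: Pa00)
  let ?R = "ra (-{(1,0),(0,1)}) a"
  have a10: "a 1 0 = 0"
  proof (rule LIMz[OF d1, of "a 1 0" 1 "\<lambda>t. Pa ?R t 0" "\<bar>K\<bar>" "SA ?R"])
    fix t :: real assume t: "0 < \<bar>t\<bar>" "\<bar>t\<bar> \<le> min \<delta> 1"
    show "\<bar>a 1 0 * t ^ 1 + Pa ?R t 0\<bar> \<le> \<bar>K\<bar> * \<bar>t\<bar> ^ (1 + 1)" using bx[OF t(2), of 2] E1[of a t 0] by (simp add: power2_eq_square)
    show "\<bar>Pa ?R t 0\<bar> \<le> SA ?R * \<bar>t\<bar> ^ (1 + 1)" using R1b[of a t 0] z t by (simp add: power2_eq_square)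
  qed
  have a01: "a 0 1 = 0"
  proof (rule LIMz[OF d1, of "a 0 1" 1 "\<lambda>t. Pa ?R 0 t" K "SA ?R"])
    fix t :: real assume t: "0 < \<bar>t\<bar>" "\<bar>t\<bar> \<le> min \<delta> 1"
    show "\<bar>a 0 1 * t ^ 1 + Pa ?R 0 t\<bar> \<le> K * \<bar>t\<bar> ^ (1 + 1)" using b[of 0 t] E1[of a 0 t] t d
      by (simp add: power2_eq_square)
    show "\<bar>Pa ?R 0 t\<bar> \<le> SA ?R * \<bar>t\<bar> ^ (1 + 1)" using R1b[of a 0 t] z t by (simp add: power2_eq_square)
  qed
  let ?R2 = "ra (-{(2,0),(1,1),(0,2)}) a"
  have a20: "a 2 0 = 0"
  proof (rule LIMz[OF d1, of "a 2 0" 2 "\<lambda>t. Pa ?R2 t 0" "\<bar>K\<bar>" "SA ?R2"])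
    fix t :: real assume t: "0 < \<bar>t\<bar>" "\<bar>t\<bar> \<le> min \<delta> 1"
    show "\<bar>a 2 0 * t ^ 2 + Pa ?R2 t 0\<bar> \<le> \<bar>K\<bar> * \<bar>t\<bar> ^ (2 + 1)" using bx[OF t(2), of 3] E2[of a t 0] by simp
    have "\<bar>Pa ?R2 t 0\<bar> \<le> SA ?R2 * (\<bar>t\<bar> * (t^2 + 0^2))" using R2b[of a t "\<bar>t\<bar>" 0] z a10 a01 t by simp
    then show "\<bar>Pa ?R2 t 0\<bar> \<le> SA ?R2 * \<bar>t\<bar> ^ (2 + 1)" by (simp add: power2_eq_square power3_eq_cube abs_mult_self_eq)
  qed
  let ?R3 = "ra (-{(1,1),(3,0)}) a"
  have a30: "a 3 0 = 0"
  proof (rule LIMz[OF d1, of "a 3 0" 3 "\<lambda>t. Pa ?R3 t 0" "\<bar>K\<bar>" "SA ?R3"])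
    fix t :: real assume t: "0 < \<bar>t\<bar>" "\<bar>t\<bar> \<le> min \<delta> 1"
    show "\<bar>a 3 0 * t ^ 3 + Pa ?R3 t 0\<bar> \<le> \<bar>K\<bar> * \<bar>t\<bar> ^ (3 + 1)" using bx[OF t(2), of 4] E3[of a t 0] by simp
    have "\<bar>Pa ?R3 t 0\<bar> \<le> SA ?R3 * (t^4 + 0^2)" using R3b[of a t 0] z a10 a01 a20 t by simp
    then show "\<bar>Pa ?R3 t 0\<bar> \<le> SA ?R3 * \<bar>t\<bar> ^ (3 + 1)" by simp
  qed
  have "a 1 1 + a 3 0 = 0"
  proof (rule LIMz[OF d1, of "a 1 1 + a 3 0" 3 "\<lambda>t. Pa ?R3 t (t^2)" "2 * \<bar>K\<bar>" "2 * SA ?R3"])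
    fix t :: real assume t: "0 < \<bar>t\<bar>" "\<bar>t\<bar> \<le> min \<delta> 1"
    have t2: "\<bar>t^2\<bar> \<le> min \<delta> 1"
    proof -
      have "\<bar>t\<bar> * \<bar>t\<bar> \<le> 1 * \<bar>t\<bar>" using t by (intro mult_right_mono) auto
      then have "\<bar>t^2\<bar> \<le> \<bar>t\<bar>" by (simp add: power2_eq_square abs_mult)
      then show ?thesis using t by linarith
    qed
    have "\<bar>Pa a t (t^2)\<bar> \<le> K * (t^4 + (t^2)^2)" using b[of t "t^2"] t t2 by simp
    also have "\<dots> \<le> \<bar>K\<bar> * (t^4 + (t^2)^2)" by (simp add: mult_right_mono)
    also have "\<dots> = 2 * \<bar>K\<bar> * \<bar>t\<bar> ^ (3 + 1)" by (simp add: power_mult[symmetric])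
    finally show "\<bar>(a 1 1 + a 3 0) * t ^ 3 + Pa ?R3 t (t^2)\<bar> \<le> 2 * \<bar>K\<bar> * \<bar>t\<bar> ^ (3 + 1)"
      using E3[of a t "t^2"] by (simp add: algebra_simps power2_eq_square power3_eq_cube)
    have t2': "\<bar>t^2\<bar> \<le> 1" using t2 by simp
    have "\<bar>Pa ?R3 t (t^2)\<bar> \<le> SA ?R3 * (t^4 + (t^2)^2)" using R3b[of a t "t^2"] z a10 a01 a20 t t2' by simp
    also have "\<dots> = 2 * SA ?R3 * \<bar>t\<bar> ^ (3 + 1)" by (simp add: power_mult[symmetric])
    finally show "\<bar>Pa ?R3 t (t^2)\<bar> \<le> 2 * SA ?R3 * \<bar>t\<bar> ^ (3 + 1)" .
  qed
  then have "a 1 1 = 0" using a30 by simp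
  then show ?thesis using z a10 a01 a20 a30 by (simp add: lowpl_def)
qed

lemma QF:
  fixes \<alpha> \<beta> \<gamma> :: real
  assumes "0 < \<alpha>" "\<beta>^2 < 4 * \<alpha> * \<gamma>"
  shows "\<exists>c>0. \<forall>U V. c * (U^2 + V^2) \<le> \<alpha> * U^2 + \<beta> * U * V + \<gamma> * V^2"
proof -
  define d where "d = 4 * \<alpha> * \<gamma> - \<beta>^2"
  have d0: "0 < d" using assms by (simp add: d_def)
  have g0: "0 < \<gamma>"
  proof (rule ccontr)
    assume "\<not> 0 < \<gamma>"
    then have "4 * \<alpha> * \<gamma> \<le> 0" using assms(1) by (simp add: mult_nonneg_nonpos)
    then show False using assms(2) by (smt (verit) zero_le_power2)
  qed
  define c where "c = d / (4 * (\<alpha> + \<gamma>))"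
  have c0: "0 < c" using d0 assms g0 by (simp add: c_def)
  have "c * (U^2 + V^2) \<le> \<alpha> * U^2 + \<beta> * U * V + \<gamma> * V^2" for U V
  proof -
    let ?Q = "\<alpha> * U^2 + \<beta> * U * V + \<gamma> * V^2"
    have e1: "4 * \<alpha> * ?Q = (2 * \<alpha> * U + \<beta> * V)^2 + d * V^2"
      by (simp add: d_def power2_eq_square algebra_simps)
    have e2: "4 * \<gamma> * ?Q = (2 * \<gamma> * V + \<beta> * U)^2 + d * U^2"
      by (simp add: d_def power2_eq_square algebra_simps)
    have "d * V^2 \<le> 4 * \<alpha> * ?Q" using e1 by simp
    moreover have "d * U^2 \<le> 4 * \<gamma> * ?Q" using e2 by simp
    ultimately have "d * (U^2 + V^2) \<le> (4 * (\<alpha> + \<gamma>)) * ?Q" by (simp add: algebra_simps)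
    then have "d / (4 * (\<alpha> + \<gamma>)) * (U^2 + V^2) \<le> ?Q" using assms g0
      by (simp add: field_simps)
    then show ?thesis by (simp add: c_def)
  qed
  then show ?thesis using c0 by blast
qed

lemma QN:
  fixes \<alpha> \<beta> \<gamma> :: real
  assumes nn: "\<And>v. 0 \<le> \<alpha> + \<beta> * v + \<gamma> * v^2"
  shows "\<beta>^2 \<le> 4 * \<alpha> * \<gamma>"
proof -
  have a0: "0 \<le> \<alpha>" using nn[of 0] by simp
  have g0: "0 \<le> \<gamma>"
  proof (rule ccontr)
    assume "\<not> 0 \<le> \<gamma>"
    then have g: "\<gamma> < 0" by simp
    define v where "v = (\<alpha> + \<bar>\<beta>\<bar> + 1) / (-\<gamma>) + 1"
    have "0 \<le> (\<alpha> + \<bar>\<beta>\<bar> + 1) / (-\<gamma>)" using g a0 by (intro divide_nonneg_pos) auto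
    then have v1: "1 \<le> v" unfolding v_def by linarith
    have "\<alpha> + \<bar>\<beta>\<bar> + 1 \<le> (-\<gamma>) * v" using g by (simp add: v_def field_simps)
    then have h: "(\<alpha> + \<bar>\<beta>\<bar>) + \<gamma> * v \<le> -1" by (simp add: algebra_simps)
    have "\<alpha> + \<beta> * v + \<gamma> * v^2 \<le> \<alpha> * v + \<bar>\<beta>\<bar> * v + \<gamma> * v^2"
      using v1 a0 by (smt (verit) abs_ge_self mult_left_mono mult_right_mono mult.commute mult_cancel_left1)
    also have "\<dots> = v * ((\<alpha> + \<bar>\<beta>\<bar>) + \<gamma> * v)" by (simp add: power2_eq_square algebra_simps)
    also have "\<dots> \<le> v * (-1)" using h v1 by (intro mult_left_mono) auto
    finally show False using nn[of v] v1 by linarith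
  qed
  show ?thesis
  proof (cases "\<gamma> = 0")
    case True
    have "\<beta> = 0"
    proof (rule ccontr)
      assume "\<beta> \<noteq> 0"
      then have "\<alpha> + \<beta> * (-(\<alpha> + 1) / \<beta>) + \<gamma> * (-(\<alpha> + 1) / \<beta>)^2 = -1" using True by simp
      then show False using nn[of "-(\<alpha> + 1) / \<beta>"] by linarith
    qed
    then show ?thesis using True by simp
  next
    case False
    then have g: "0 < \<gamma>" using g0 by simp
    have "0 \<le> \<alpha> + \<beta> * (-\<beta> / (2 * \<gamma>)) + \<gamma> * (-\<beta> / (2 * \<gamma>))^2" by (rule nn)
    also have "\<dots> = (4 * \<alpha> * \<gamma> - \<beta>^2) / (4 * \<gamma>)" using g by (simp add: field_simps power2_eq_square)
    finally show ?thesis using g by (simp add: divide_nonneg_pos le_divide_eq)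
  qed
qed


lemma hpart2: "hpart a 2 u w = a 2 0 * u^2 + a 1 1 * u * w + a 0 2 * w^2"
  by (simp add: hpart_def eval_nat_numeral atMost_Suc algebra_simps)

lemma tilde00: "tilde a 0 0 = a 2 0"
  by (simp add: tilde_def hpart_def eval_nat_numeral atMost_Suc)

lemma coeff_hpoly: "j \<le> k \<Longrightarrow> coeff (hpoly a k) j = a (k - j) j"
proof -
  assume jk: "j \<le> k"
  have "coeff (hpoly a k) j = (\<Sum>i\<le>k. if k - i = j then a i (k - i) else 0)"
    by (simp add: hpoly_def coeff_sum coeff_monom)
  also have "\<dots> = (\<Sum>i\<in>{k - j}. if k - i = j then a i (k - i) else 0)"
    by (rule sum.mono_neutral_right) (use jk in auto)
  also have "\<dots> = a (k - j) j" using jk by simp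
  finally show ?thesis .
qed

lemma disc_dd:
  assumes "a 2 0 = 0" "a 1 1 = 0" "a 3 0 = 0"
  shows "poly (pderiv (pderiv (disc a))) 0 = 2 * ((a 2 1)^2 - 4 * a 0 2 * a 4 0)"
proof -
  have "poly (pderiv (pderiv (disc a))) 0 = 2 * coeff (disc a) 2"
    by (simp add: poly_0_coeff_0 coeff_pderiv numeral_2_eq_2)
  also have "coeff (disc a) 2 = (a 2 1)^2 - 4 * a 0 2 * a 4 0"
    using assms
    by (simp add: disc_def power2_eq_square coeff_mult coeff_hpoly eval_nat_numeral atMost_Suc algebra_simps)
  finally show ?thesis .
qed

lemma lower_pt:
  assumes nn: "\<And>x y. 0 \<le> Pa a x y" and z: "a 0 0 = 0" "a 1 0 = 0" "a 0 1 = 0"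
    and nz: "\<And>u w. (u, w) \<noteq> (0, 0) \<Longrightarrow> hpart a 2 u w \<noteq> 0"
  shows "\<exists>\<delta>>0. \<exists>c>0. \<forall>x y. \<bar>x\<bar> \<le> \<delta> \<longrightarrow> \<bar>y\<bar> \<le> \<delta> \<longrightarrow> c * (x^2 + y^2) \<le> Pa a x y"
proof -
  let ?R = "ra (-{(2,0),(1,1),(0,2)}) a"
  have "0 \<le> a 2 0"
  proof (rule LIMp[of 1 "a 2 0" 2 "\<lambda>t. Pa ?R t 0" "SA ?R"])
    fix t :: real assume t: "0 < t" "t \<le> 1"
    show "0 \<le> a 2 0 * t ^ 2 + Pa ?R t 0" using nn[of t 0] E2[of a t 0] by simp
    have "\<bar>Pa ?R t 0\<bar> \<le> SA ?R * (t * (t^2 + 0^2))" using R2b[of a t t 0] z t by simp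
    then show "\<bar>Pa ?R t 0\<bar> \<le> SA ?R * t ^ (2 + 1)" by (simp add: power2_eq_square power3_eq_cube)
  qed simp
  moreover have "a 2 0 \<noteq> 0" using nz[of 1 0] by (simp add: hpart2)
  ultimately have a20: "0 < a 2 0" by simp
  have disc: "(a 1 1)^2 < 4 * a 2 0 * a 0 2"
  proof (rule ccontr)
    assume "\<not> ?thesis"
    then have "0 \<le> discrim (a 2 0) (a 1 1) (a 0 2)" by (simp add: discrim_def)
    then obtain u where "a 2 0 * u^2 + a 1 1 * u + a 0 2 = 0"
      using discriminant_nonneg_ex[of "a 2 0" "a 1 1" "a 0 2"] a20 by auto
    then have "hpart a 2 u 1 = 0" by (simp add: hpart2)
    then show False using nz[of u 1] by simp
  qed
  obtain c where c: "0 < c" "\<And>U V. c * (U^2 + V^2) \<le> a 2 0 * U^2 + a 1 1 * U * V + a 0 2 * V^2"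
    using QF[OF a20 disc] by blast
  define \<delta> where "\<delta> = min 1 (c / (2 * (SA ?R + 1)))"
  have d0: "0 < \<delta>" using c SA_nonneg[of ?R] by (simp add: \<delta>_def)
  have d1: "\<delta> \<le> 1" by (simp add: \<delta>_def)
  have "SA ?R * \<delta> \<le> (SA ?R + 1) * \<delta>" using d0 by (simp add: mult_right_mono)
  also have "\<dots> \<le> (SA ?R + 1) * (c / (2 * (SA ?R + 1)))" using SA_nonneg[of ?R]
    by (intro mult_left_mono) (auto simp: \<delta>_def)
  also have "\<dots> = c / 2" using SA_nonneg[of ?R] by (simp add: field_simps)
  finally have sd: "SA ?R * \<delta> \<le> c / 2" .
  have "c / 2 * (x^2 + y^2) \<le> Pa a x y" if "\<bar>x\<bar> \<le> \<delta>" "\<bar>y\<bar> \<le> \<delta>" for x y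
  proof -
    have "\<bar>Pa ?R x y\<bar> \<le> SA ?R * (\<delta> * (x^2 + y^2))" using R2b[of a x \<delta> y] z that d1 by simp
    also have "\<dots> = (SA ?R * \<delta>) * (x^2 + y^2)" by simp
    also have "\<dots> \<le> c / 2 * (x^2 + y^2)" using sd by (intro mult_right_mono) auto
    finally have "\<bar>Pa ?R x y\<bar> \<le> c / 2 * (x^2 + y^2)" .
    moreover have "c * (x^2 + y^2) \<le> a 2 0 * x^2 + a 1 1 * x * y + a 0 2 * y^2" by (rule c(2))
    moreover have "Pa a x y = a 2 0 * x^2 + a 1 1 * x * y + a 0 2 * y^2 + Pa ?R x y" by (rule E2)
    ultimately show ?thesis by (simp add: algebra_simps)
  qed
  then show ?thesis using d0 c(1) by (intro exI[of _ \<delta>] conjI exI[of _ "c/2"]) auto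
qed

lemma lower_pl:
  assumes nn: "\<And>x y. 0 \<le> Pa a x y" and wf: "wf4 a" and lp: "lowpl a"
    and dne: "(a 2 1)^2 \<noteq> 4 * a 0 2 * a 4 0"
  shows "\<exists>\<delta>>0. \<exists>c>0. \<forall>x y. \<bar>x\<bar> \<le> \<delta> \<longrightarrow> \<bar>y\<bar> \<le> \<delta> \<longrightarrow> c * (x^4 + y^2) \<le> Pa a x y"
proof -
  let ?R = "ra (-{(4,0),(2,1),(0,2)}) a"
  have q: "0 \<le> a 4 0 + a 2 1 * v + a 0 2 * v^2" for v
  proof (rule LIMp[of "1 / (1 + \<bar>v\<bar>)" _ 4 "\<lambda>t. Pa ?R t (v * t^2)" "SA ?R * (1 + \<bar>v\<bar>) * (1 + v^2)"])
    show "0 < 1 / (1 + \<bar>v\<bar>)" by (simp add: add_pos_nonneg)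
  next
    fix t :: real assume t: "0 < t" "t \<le> 1 / (1 + \<bar>v\<bar>)"
    show "0 \<le> (a 4 0 + a 2 1 * v + a 0 2 * v^2) * t ^ 4 + Pa ?R t (v * t^2)"
      using nn[of t "v * t^2"] E4[of a t "v * t^2"] by (simp add: algebra_simps eval_nat_numeral)
    define e where "e = t * (1 + \<bar>v\<bar>)"
    have e1: "e \<le> 1" using t by (simp add: e_def field_simps)
    have t1: "t \<le> 1" using t by (smt (verit) e1 e_def mult_le_cancel_left1 abs_ge_zero)
    have xe: "\<bar>t\<bar> \<le> e" using t by (simp add: e_def)
    have "\<bar>v * t^2\<bar> = \<bar>v\<bar> * t * t" by (simp add: abs_mult power2_eq_square t(1) abs_of_pos)
    also have "\<dots> \<le> \<bar>v\<bar> * t * 1" using t t1 by (intro mult_left_mono) auto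
    also have "\<dots> \<le> e" using t by (simp add: e_def algebra_simps)
    finally have ye: "\<bar>v * t^2\<bar> \<le> e" .
    have "\<bar>Pa ?R t (v * t^2)\<bar> \<le> SA ?R * (e * (t^4 + (v * t^2)^2))" using R4b[OF wf lp xe ye e1] .
    also have "\<dots> = SA ?R * (1 + \<bar>v\<bar>) * (1 + v^2) * t ^ (4 + 1)"
      by (simp add: e_def power2_eq_square eval_nat_numeral algebra_simps)
    finally show "\<bar>Pa ?R t (v * t^2)\<bar> \<le> SA ?R * (1 + \<bar>v\<bar>) * (1 + v^2) * t ^ (4 + 1)" .
  qed
  have "(a 2 1)^2 \<le> 4 * a 4 0 * a 0 2" using QN[of "a 4 0" "a 2 1" "a 0 2"] q by blast
  then have disc: "(a 2 1)^2 < 4 * a 4 0 * a 0 2" using dne by (simp add: algebra_simps)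
  have "0 \<le> a 4 0" using q[of 0] by simp
  moreover have "a 4 0 \<noteq> 0" using disc by (auto simp: zero_le_power2)
  ultimately have a40: "0 < a 4 0" by simp
  obtain c where c: "0 < c" "\<And>U V. c * (U^2 + V^2) \<le> a 4 0 * U^2 + a 2 1 * U * V + a 0 2 * V^2"
    using QF[OF a40 disc] by blast
  define \<delta> where "\<delta> = min 1 (c / (2 * (SA ?R + 1)))"
  have d0: "0 < \<delta>" using c SA_nonneg[of ?R] by (simp add: \<delta>_def)
  have d1: "\<delta> \<le> 1" by (simp add: \<delta>_def)
  have "SA ?R * \<delta> \<le> (SA ?R + 1) * \<delta>" using d0 by (simp add: mult_right_mono)
  also have "\<dots> \<le> (SA ?R + 1) * (c / (2 * (SA ?R + 1)))" using SA_nonneg[of ?R]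
    by (intro mult_left_mono) (auto simp: \<delta>_def)
  also have "\<dots> = c / 2" using SA_nonneg[of ?R] by (simp add: field_simps)
  finally have sd: "SA ?R * \<delta> \<le> c / 2" .
  have "c / 2 * (x^4 + y^2) \<le> Pa a x y" if "\<bar>x\<bar> \<le> \<delta>" "\<bar>y\<bar> \<le> \<delta>" for x y
  proof -
    have "\<bar>Pa ?R x y\<bar> \<le> SA ?R * (\<delta> * (x^4 + y^2))" using R4b[OF wf lp that d1] .
    also have "\<dots> = (SA ?R * \<delta>) * (x^4 + y^2)" by simp
    also have "\<dots> \<le> c / 2 * (x^4 + y^2)" using sd by (intro mult_right_mono) auto
    finally have "\<bar>Pa ?R x y\<bar> \<le> c / 2 * (x^4 + y^2)" .
    moreover have "c * ((x^2)^2 + y^2) \<le> a 4 0 * (x^2)^2 + a 2 1 * x^2 * y + a 0 2 * y^2" by (rule c(2))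
    moreover have "Pa a x y = a 4 0 * x^4 + a 2 1 * x^2 * y + a 0 2 * y^2 + Pa ?R x y" by (rule E4)
    ultimately show ?thesis by (simp add: algebra_simps power_mult[symmetric])
  qed
  then show ?thesis using d0 c(1) by (intro exI[of _ \<delta>] conjI exI[of _ "c/2"]) auto
qed


lemma sq_sum_le: "(\<bar>x\<bar> + \<bar>y\<bar>)^2 \<le> 2 * ((x::real)^2 + y^2)"
proof -
  have "0 \<le> (\<bar>x\<bar> - \<bar>y\<bar>)^2" by simp
  then show ?thesis by (simp add: power2_eq_square algebra_simps)
qed

lemma q_sum_le: "(\<bar>x\<bar> + \<bar>y\<bar>)^4 \<le> 8 * ((x::real)^4 + y^4)"
proof -
  have "(\<bar>x\<bar> + \<bar>y\<bar>)^4 = ((\<bar>x\<bar> + \<bar>y\<bar>)^2)^2" by (simp add: power_mult[symmetric])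
  also have "\<dots> \<le> (2 * (x^2 + y^2))^2" using sq_sum_le[of x y] by (intro power_mono) auto
  also have "\<dots> = 4 * (x^2 + y^2)^2" by (simp only: power_mult_distrib) simp
  also have "\<dots> \<le> 4 * (2 * ((x^2)^2 + (y^2)^2))" using sq_sum_le[of "x^2" "y^2"] by simp
  also have "\<dots> = 8 * (x^4 + y^4)" by (simp add: power_mult[symmetric])
  finally show ?thesis .
qed

lemma core_est:
  fixes p1 q1 p2 q2 p3 q3 k \<delta> :: real
  assumes k: "k \<noteq> 0" and d: "0 < \<delta>"
  shows "\<exists>\<eta>>0. \<eta> \<le> 1 \<and> (\<exists>C>0. \<forall>x y. \<bar>x\<bar> \<le> \<eta> \<longrightarrow> \<bar>y\<bar> \<le> \<eta> \<longrightarrow>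
     \<bar>k\<bar> / 2 \<le> \<bar>p3 * x + q3 * y + k\<bar> \<and> \<bar>p3 * x + q3 * y + k\<bar> \<le> 2 * \<bar>k\<bar> \<and>
     \<bar>(p1 * x + q1 * y) / (p3 * x + q3 * y + k)\<bar> \<le> C * (\<bar>x\<bar> + \<bar>y\<bar>) \<and>
     \<bar>(p2 * x + q2 * y) / (p3 * x + q3 * y + k)\<bar> \<le> C * (\<bar>x\<bar> + \<bar>y\<bar>) \<and>
     (p2 = 0 \<longrightarrow> \<bar>(p2 * x + q2 * y) / (p3 * x + q3 * y + k)\<bar> \<le> C * \<bar>y\<bar>) \<and>
     C * (\<bar>x\<bar> + \<bar>y\<bar>) \<le> \<delta>)"
proof -
  define S3 where "S3 = \<bar>p3\<bar> + \<bar>q3\<bar>"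
  define C where "C = 2 * (\<bar>p1\<bar> + \<bar>q1\<bar> + \<bar>p2\<bar> + \<bar>q2\<bar> + 1) / \<bar>k\<bar>"
  define \<eta> where "\<eta> = min (min 1 (\<bar>k\<bar> / (2 * (S3 + 1)))) (\<delta> / (2 * C))"
  have S30: "0 \<le> S3" by (simp add: S3_def)
  have C0: "0 < C" using k by (simp add: C_def add_pos_nonneg)
  have e0: "0 < \<eta>" using k d C0 S30 by (simp add: \<eta>_def)
  have e1: "\<eta> \<le> 1" by (simp add: \<eta>_def)
  have "\<bar>k\<bar> / 2 \<le> \<bar>p3 * x + q3 * y + k\<bar> \<and> \<bar>p3 * x + q3 * y + k\<bar> \<le> 2 * \<bar>k\<bar> \<and>
     \<bar>(p1 * x + q1 * y) / (p3 * x + q3 * y + k)\<bar> \<le> C * (\<bar>x\<bar> + \<bar>y\<bar>) \<and>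
     \<bar>(p2 * x + q2 * y) / (p3 * x + q3 * y + k)\<bar> \<le> C * (\<bar>x\<bar> + \<bar>y\<bar>) \<and>
     (p2 = 0 \<longrightarrow> \<bar>(p2 * x + q2 * y) / (p3 * x + q3 * y + k)\<bar> \<le> C * \<bar>y\<bar>) \<and>
     C * (\<bar>x\<bar> + \<bar>y\<bar>) \<le> \<delta>" if xy: "\<bar>x\<bar> \<le> \<eta>" "\<bar>y\<bar> \<le> \<eta>" for x y
  proof -
    have "\<bar>p3 * x + q3 * y\<bar> \<le> \<bar>p3\<bar> * \<bar>x\<bar> + \<bar>q3\<bar> * \<bar>y\<bar>" by (simp add: abs_mult abs_triangle_ineq[THEN order_trans])
    also have "\<dots> \<le> \<bar>p3\<bar> * \<eta> + \<bar>q3\<bar> * \<eta>" using xy by (intro add_mono mult_left_mono) auto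
    also have "\<dots> = S3 * \<eta>" by (simp add: S3_def algebra_simps)
    also have "\<dots> \<le> S3 * (\<bar>k\<bar> / (2 * (S3 + 1)))" using S30 by (intro mult_left_mono) (auto simp: \<eta>_def)
    also have "\<dots> \<le> \<bar>k\<bar> / 2" using S30 k by (simp add: field_simps)
    finally have h3: "\<bar>p3 * x + q3 * y\<bar> \<le> \<bar>k\<bar> / 2" .
    then have X3l: "\<bar>k\<bar> / 2 \<le> \<bar>p3 * x + q3 * y + k\<bar>" and X3u: "\<bar>p3 * x + q3 * y + k\<bar> \<le> 2 * \<bar>k\<bar>" by linarith+
    have X3p: "0 < \<bar>p3 * x + q3 * y + k\<bar>" using X3l k by linarith
    have dv: "\<bar>Z / (p3 * x + q3 * y + k)\<bar> \<le> \<bar>Z\<bar> * (2 / \<bar>k\<bar>)" for Z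
    proof -
      have "\<bar>Z / (p3 * x + q3 * y + k)\<bar> = \<bar>Z\<bar> / \<bar>p3 * x + q3 * y + k\<bar>" by (simp add: abs_divide)
      also have "\<dots> \<le> \<bar>Z\<bar> / (\<bar>k\<bar> / 2)" using X3l k X3p by (intro divide_left_mono) (auto intro: mult_pos_pos)
      finally show ?thesis by simp
    qed
    have lin: "\<bar>p * x + q * y\<bar> \<le> (\<bar>p\<bar> + \<bar>q\<bar>) * (\<bar>x\<bar> + \<bar>y\<bar>)" for p q
    proof -
      have "\<bar>p * x + q * y\<bar> \<le> \<bar>p\<bar> * \<bar>x\<bar> + \<bar>q\<bar> * \<bar>y\<bar>" by (simp add: abs_mult abs_triangle_ineq[THEN order_trans])
      also have "\<dots> \<le> (\<bar>p\<bar> + \<bar>q\<bar>) * (\<bar>x\<bar> + \<bar>y\<bar>)" by (simp add: algebra_simps)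
      finally show ?thesis .
    qed
    have Cge: "(\<bar>p\<bar> + \<bar>q\<bar>) * (2 / \<bar>k\<bar>) \<le> C" if "\<bar>p\<bar> + \<bar>q\<bar> \<le> \<bar>p1\<bar> + \<bar>q1\<bar> + \<bar>p2\<bar> + \<bar>q2\<bar> + 1" for p q
      using that k by (simp add: C_def divide_right_mono)
    have b1: "\<bar>(p1 * x + q1 * y) / (p3 * x + q3 * y + k)\<bar> \<le> C * (\<bar>x\<bar> + \<bar>y\<bar>)"
    proof -
      have "\<bar>(p1 * x + q1 * y) / (p3 * x + q3 * y + k)\<bar> \<le> ((\<bar>p1\<bar> + \<bar>q1\<bar>) * (\<bar>x\<bar> + \<bar>y\<bar>)) * (2 / \<bar>k\<bar>)"
        using dv[of "p1 * x + q1 * y"] lin[of p1 q1] k by (smt (verit) divide_nonneg_nonneg mult_right_mono abs_ge_zero)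
      also have "\<dots> = ((\<bar>p1\<bar> + \<bar>q1\<bar>) * (2 / \<bar>k\<bar>)) * (\<bar>x\<bar> + \<bar>y\<bar>)" by simp
      also have "\<dots> \<le> C * (\<bar>x\<bar> + \<bar>y\<bar>)" using Cge[of p1 q1] by (intro mult_right_mono) auto
      finally show ?thesis .
    qed
    have b2: "\<bar>(p2 * x + q2 * y) / (p3 * x + q3 * y + k)\<bar> \<le> C * (\<bar>x\<bar> + \<bar>y\<bar>)"
    proof -
      have "\<bar>(p2 * x + q2 * y) / (p3 * x + q3 * y + k)\<bar> \<le> ((\<bar>p2\<bar> + \<bar>q2\<bar>) * (\<bar>x\<bar> + \<bar>y\<bar>)) * (2 / \<bar>k\<bar>)"
        using dv[of "p2 * x + q2 * y"] lin[of p2 q2] k by (smt (verit) divide_nonneg_nonneg mult_right_mono abs_ge_zero)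
      also have "\<dots> = ((\<bar>p2\<bar> + \<bar>q2\<bar>) * (2 / \<bar>k\<bar>)) * (\<bar>x\<bar> + \<bar>y\<bar>)" by simp
      also have "\<dots> \<le> C * (\<bar>x\<bar> + \<bar>y\<bar>)" using Cge[of p2 q2] by (intro mult_right_mono) auto
      finally show ?thesis .
    qed
    have b3: "\<bar>(p2 * x + q2 * y) / (p3 * x + q3 * y + k)\<bar> \<le> C * \<bar>y\<bar>" if "p2 = 0"
    proof -
      have "\<bar>(p2 * x + q2 * y) / (p3 * x + q3 * y + k)\<bar> \<le> (\<bar>q2\<bar> * \<bar>y\<bar>) * (2 / \<bar>k\<bar>)"
        using dv[of "p2 * x + q2 * y"] that by (simp add: abs_mult)
      also have "\<dots> = ((\<bar>0\<bar> + \<bar>q2\<bar>) * (2 / \<bar>k\<bar>)) * \<bar>y\<bar>" by simp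
      also have "\<dots> \<le> C * \<bar>y\<bar>" using Cge[of 0 q2] by (intro mult_right_mono) auto
      finally show ?thesis .
    qed
    have "C * (\<bar>x\<bar> + \<bar>y\<bar>) \<le> C * (2 * \<eta>)" using xy C0 by (intro mult_left_mono) auto
    also have "\<dots> \<le> C * (2 * (\<delta> / (2 * C)))" using C0 by (intro mult_left_mono) (auto simp: \<eta>_def)
    also have "\<dots> = \<delta>" using C0 by simp
    finally have b4: "C * (\<bar>x\<bar> + \<bar>y\<bar>) \<le> \<delta>" .
    show ?thesis using X3l X3u b1 b2 b3 b4 by blast
  qed
  then show ?thesis using e0 e1 C0 by blast
qed


lemma abs_bound_K: "\<bar>G\<bar> \<le> K * (r::real) \<Longrightarrow> 0 \<le> r \<Longrightarrow> \<bar>G\<bar> \<le> \<bar>K\<bar> * r"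
  by (smt (verit) abs_ge_self mult_right_mono)

lemma TR_abs:
  fixes G G' :: "real \<Rightarrow> real \<Rightarrow> real" and \<rho> :: "real \<Rightarrow> real \<Rightarrow> real"
  assumes k: "k \<noteq> 0" and d: "0 < \<delta>"
    and rel: "\<And>x y. pC * x + qC * y + k \<noteq> 0 \<Longrightarrow>
       G' x y = (pC * x + qC * y + k)^4 * G ((pA * x + qA * y) / (pC * x + qC * y + k)) ((pB * x + qB * y) / (pC * x + qC * y + k))"
    and bnd: "\<And>x y. \<bar>x\<bar> \<le> \<delta> \<Longrightarrow> \<bar>y\<bar> \<le> \<delta> \<Longrightarrow> \<bar>G x y\<bar> \<le> K * \<rho> x y"
    and rho0: "\<And>x y. 0 \<le> \<rho> x y"
    and rhoT: "\<And>C x y u w. 0 < C \<Longrightarrow> \<bar>x\<bar> \<le> 1 \<Longrightarrow> \<bar>y\<bar> \<le> 1 \<Longrightarrow> \<bar>u\<bar> \<le> C * (\<bar>x\<bar> + \<bar>y\<bar>) \<Longrightarrow>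
        \<bar>w\<bar> \<le> C * (\<bar>x\<bar> + \<bar>y\<bar>) \<Longrightarrow> (pB = 0 \<longrightarrow> \<bar>w\<bar> \<le> C * \<bar>y\<bar>) \<Longrightarrow> \<rho> u w \<le> L C * \<rho> x y"
  shows "\<exists>\<delta>'>0. \<exists>K'. \<forall>x y. \<bar>x\<bar> \<le> \<delta>' \<longrightarrow> \<bar>y\<bar> \<le> \<delta>' \<longrightarrow> \<bar>G' x y\<bar> \<le> K' * \<rho> x y"
proof -
  obtain \<eta> C where e: "0 < \<eta>" "\<eta> \<le> 1" "0 < C" and est: "\<And>x y. \<bar>x\<bar> \<le> \<eta> \<Longrightarrow> \<bar>y\<bar> \<le> \<eta> \<Longrightarrow>
     \<bar>k\<bar> / 2 \<le> \<bar>pC * x + qC * y + k\<bar> \<and> \<bar>pC * x + qC * y + k\<bar> \<le> 2 * \<bar>k\<bar> \<and>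
     \<bar>(pA * x + qA * y) / (pC * x + qC * y + k)\<bar> \<le> C * (\<bar>x\<bar> + \<bar>y\<bar>) \<and>
     \<bar>(pB * x + qB * y) / (pC * x + qC * y + k)\<bar> \<le> C * (\<bar>x\<bar> + \<bar>y\<bar>) \<and>
     (pB = 0 \<longrightarrow> \<bar>(pB * x + qB * y) / (pC * x + qC * y + k)\<bar> \<le> C * \<bar>y\<bar>) \<and>
     C * (\<bar>x\<bar> + \<bar>y\<bar>) \<le> \<delta>"
    using core_est[OF k d, of pC qC pA qA pB qB] by blast
  have "\<bar>G' x y\<bar> \<le> ((2 * \<bar>k\<bar>)^4 * (\<bar>K\<bar> * L C)) * \<rho> x y" if xy: "\<bar>x\<bar> \<le> \<eta>" "\<bar>y\<bar> \<le> \<eta>" for x y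
  proof -
    define X3 where "X3 = pC * x + qC * y + k"
    define u where "u = (pA * x + qA * y) / X3"
    define w where "w = (pB * x + qB * y) / X3"
    note E = est[OF xy, folded X3_def, folded u_def w_def]
    have X3nz: "X3 \<noteq> 0" using E k by auto
    have uw: "\<bar>u\<bar> \<le> \<delta>" "\<bar>w\<bar> \<le> \<delta>" using E by linarith+
    have x1: "\<bar>x\<bar> \<le> 1" "\<bar>y\<bar> \<le> 1" using xy e by linarith+
    have r: "\<rho> u w \<le> L C * \<rho> x y" using rhoT[OF e(3) x1] E by blast
    have g: "\<bar>G u w\<bar> \<le> \<bar>K\<bar> * \<rho> u w" using bnd[OF uw] rho0 abs_bound_K by blast
    have "\<bar>G' x y\<bar> = \<bar>X3\<bar>^4 * \<bar>G u w\<bar>" using rel[of x y] X3nz by (simp add: X3_def u_def w_def abs_mult power_abs)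
    also have "\<dots> \<le> (2 * \<bar>k\<bar>)^4 * (\<bar>K\<bar> * (L C * \<rho> x y))"
    proof (rule mult_mono)
      show "\<bar>X3\<bar>^4 \<le> (2 * \<bar>k\<bar>)^4" using E by (intro power_mono) auto
      show "\<bar>G u w\<bar> \<le> \<bar>K\<bar> * (L C * \<rho> x y)" using g r by (smt (verit) abs_ge_zero mult_left_mono)
    qed auto
    finally show ?thesis by (simp add: mult.assoc)
  qed
  then show ?thesis using e by blast
qed

lemma TRpt_abs:
  fixes G G' :: "real \<Rightarrow> real \<Rightarrow> real"
  assumes k: "k \<noteq> 0" and d: "0 < \<delta>"
    and rel: "\<And>x y. p3 * x + q3 * y + k \<noteq> 0 \<Longrightarrow>
       G' x y = (p3 * x + q3 * y + k)^4 * G ((p1 * x + q1 * y) / (p3 * x + q3 * y + k)) ((p2 * x + q2 * y) / (p3 * x + q3 * y + k))"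
    and bnd: "\<And>x y. \<bar>x\<bar> \<le> \<delta> \<Longrightarrow> \<bar>y\<bar> \<le> \<delta> \<Longrightarrow> \<bar>G x y\<bar> \<le> K * (x^2 + y^2)"
  shows "\<exists>\<delta>'>0. \<exists>K'. \<forall>x y. \<bar>x\<bar> \<le> \<delta>' \<longrightarrow> \<bar>y\<bar> \<le> \<delta>' \<longrightarrow> \<bar>G' x y\<bar> \<le> K' * (x^2 + y^2)"
proof -
  have rT: "u^2 + w^2 \<le> 4 * C^2 * (x^2 + y^2)"
    if u: "\<bar>u\<bar> \<le> C * (\<bar>x\<bar> + \<bar>y\<bar>)" and w: "\<bar>w\<bar> \<le> C * (\<bar>x\<bar> + \<bar>y\<bar>)" for C x y u w :: real
  proof -
  have "u^2 \<le> (C * (\<bar>x\<bar> + \<bar>y\<bar>))^2" using u by (metis abs_ge_zero power2_abs power_mono)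
  moreover have "w^2 \<le> (C * (\<bar>x\<bar> + \<bar>y\<bar>))^2" using w by (metis abs_ge_zero power2_abs power_mono)
  moreover have "(C * (\<bar>x\<bar> + \<bar>y\<bar>))^2 \<le> C^2 * (2 * (x^2 + y^2))"
    using sq_sum_le[of x y] by (simp add: power_mult_distrib mult_left_mono)
  ultimately show "u^2 + w^2 \<le> 4 * C^2 * (x^2 + y^2)" by (simp add: algebra_simps)
  qed
  have "\<exists>\<delta>'>0. \<exists>K'. \<forall>x y. \<bar>x\<bar> \<le> \<delta>' \<longrightarrow> \<bar>y\<bar> \<le> \<delta>' \<longrightarrow> \<bar>G' x y\<bar> \<le> K' * ((\<lambda>x y. x^2 + y^2) x y)"
    by (rule TR_abs[where \<rho>="\<lambda>x y. x^2 + y^2" and L="\<lambda>C. 4 * C^2" and G=G and G'=G' and pA=p1 and qA=q1 and pB=p2 and qB=q2 and pC=p3 and qC=q3 and k=k, OF k d rel]) (use bnd rT in auto)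
  then show ?thesis by simp
qed

lemma TRpl_abs:
  fixes G G' :: "real \<Rightarrow> real \<Rightarrow> real"
  assumes k: "k \<noteq> 0" and d: "0 < \<delta>"
    and rel: "\<And>x y. p3 * x + q3 * y + k \<noteq> 0 \<Longrightarrow>
       G' x y = (p3 * x + q3 * y + k)^4 * G ((p1 * x + q1 * y) / (p3 * x + q3 * y + k)) ((0 * x + q2 * y) / (p3 * x + q3 * y + k))"
    and bnd: "\<And>x y. \<bar>x\<bar> \<le> \<delta> \<Longrightarrow> \<bar>y\<bar> \<le> \<delta> \<Longrightarrow> \<bar>G x y\<bar> \<le> K * (x^4 + y^2)"
  shows "\<exists>\<delta>'>0. \<exists>K'. \<forall>x y. \<bar>x\<bar> \<le> \<delta>' \<longrightarrow> \<bar>y\<bar> \<le> \<delta>' \<longrightarrow> \<bar>G' x y\<bar> \<le> K' * (x^4 + y^2)"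
proof -
  have rT: "u^4 + w^2 \<le> (8 * C^4 + C^2) * (x^4 + y^2)"
    if x1: "\<bar>x\<bar> \<le> 1" "\<bar>y\<bar> \<le> 1" and u: "\<bar>u\<bar> \<le> C * (\<bar>x\<bar> + \<bar>y\<bar>)"
    and w: "(0::real) = 0 \<longrightarrow> \<bar>w\<bar> \<le> C * \<bar>y\<bar>" for C x y u w :: real
  proof -
  have "u^4 = \<bar>u\<bar>^4" by simp
  also have "\<dots> \<le> (C * (\<bar>x\<bar> + \<bar>y\<bar>))^4" using u by (intro power_mono) auto
  also have "\<dots> = C^4 * (\<bar>x\<bar> + \<bar>y\<bar>)^4" by (simp add: power_mult_distrib)
  also have "\<dots> \<le> C^4 * (8 * (x^4 + y^4))" using q_sum_le[of x y] by (intro mult_left_mono) auto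
  also have "\<dots> \<le> C^4 * (8 * (x^4 + y^2))"
  proof -
    have "y^4 = (y^2)^2" by (simp add: power_mult[symmetric])
    also have "\<dots> = y^2 * y^2" by (rule power2_eq_square)
    also have "\<dots> \<le> 1 * y^2" using x1 by (intro mult_right_mono) (auto simp: abs_square_le_1)
    finally show ?thesis by (intro mult_left_mono) auto
  qed
  finally have "u^4 \<le> C^4 * (8 * (x^4 + y^2))" .
  moreover have "C^4 * (8 * (x^4 + y^2)) = 8 * C^4 * (x^4 + y^2)" by simp
  ultimately have u4: "u^4 \<le> 8 * C^4 * (x^4 + y^2)" by linarith
  have "w^2 \<le> (C * \<bar>y\<bar>)^2" using w by (metis abs_ge_zero power2_abs power_mono)
  then have "w^2 \<le> C^2 * y^2" by (simp add: power_mult_distrib)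
  moreover have "C^2 * y^2 \<le> C^2 * (x^4 + y^2)" by (intro mult_left_mono) auto
  ultimately have w2: "w^2 \<le> C^2 * (x^4 + y^2)" by linarith
  show "u^4 + w^2 \<le> (8 * C^4 + C^2) * (x^4 + y^2)" using u4 w2 by (simp add: algebra_simps)
  qed
  have "\<exists>\<delta>'>0. \<exists>K'. \<forall>x y. \<bar>x\<bar> \<le> \<delta>' \<longrightarrow> \<bar>y\<bar> \<le> \<delta>' \<longrightarrow> \<bar>G' x y\<bar> \<le> K' * ((\<lambda>x y. x^4 + y^2) x y)"
    by (rule TR_abs[where \<rho>="\<lambda>x y. x^4 + y^2" and L="\<lambda>C. 8 * C^4 + C^2" and G=G and G'=G' and pA=p1 and qA=q1 and pB=0 and qB=q2 and pC=p3 and qC=q3 and k=k, OF k d rel]) (use bnd rT in auto)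
  then show ?thesis by simp
qed


abbreviation e1 :: "real^3" where "e1 \<equiv> vector [1, 0, 0]"
abbreviation e2 :: "real^3" where "e2 \<equiv> vector [0, 1, 0]"
abbreviation e3 :: "real^3" where "e3 \<equiv> vector [0, 0, 1]"

lemma inv_ex:
  assumes "invertible (B::real^3^3)"
  obtains Bi where "\<And>w. B *v (Bi *v w) = w" "\<And>w. Bi *v (B *v w) = w"
proof -
  obtain A where "B ** A = mat 1" "A ** B = mat 1" using assms unfolding invertible_def by blast
  then show ?thesis using that[of A] by (simp add: matrix_vector_mul_assoc)
qed

lemma v3_decomp: "(vector [x, y, 1] :: real^3) = x *\<^sub>R e1 + y *\<^sub>R e2 + e3"
  by (simp add: vec3_eq vector_3)

lemma chart_rel:
  fixes B B' Bi :: "real^3^3"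
  assumes g: "g \<in> H4" and Bi: "\<And>w. B *v (Bi *v w) = w" and k: "B' *v e3 = k *\<^sub>R (B *v e3)"
    and nz: "(Bi *v (B' *v e1))$3 * x + (Bi *v (B' *v e2))$3 * y + k \<noteq> 0"
  shows "g (B' *v vector [x, y, 1]) =
    ((Bi *v (B' *v e1))$3 * x + (Bi *v (B' *v e2))$3 * y + k)^4 *
    g (B *v vector [((Bi *v (B' *v e1))$1 * x + (Bi *v (B' *v e2))$1 * y) /
                    ((Bi *v (B' *v e1))$3 * x + (Bi *v (B' *v e2))$3 * y + k),
                    ((Bi *v (B' *v e1))$2 * x + (Bi *v (B' *v e2))$2 * y) /
                    ((Bi *v (B' *v e1))$3 * x + (Bi *v (B' *v e2))$3 * y + k), 1])"
proof -
  define m1 where "m1 = Bi *v (B' *v e1)"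
  define m2 where "m2 = Bi *v (B' *v e2)"
  define X where "X = x *\<^sub>R m1 + y *\<^sub>R m2 + k *\<^sub>R e3"
  have "B' *v vector [x, y, 1] = x *\<^sub>R (B' *v e1) + y *\<^sub>R (B' *v e2) + B' *v e3"
    by (subst v3_decomp) (simp add: matrix_vector_right_distrib matrix_vector_mult_scaleR)
  also have "\<dots> = B *v X"
    by (simp add: X_def m1_def m2_def k Bi matrix_vector_right_distrib matrix_vector_mult_scaleR)
  finally have e: "B' *v vector [x, y, 1] = B *v X" .
  have X1: "X$1 = m1$1 * x + m2$1 * y" and X2: "X$2 = m1$2 * x + m2$2 * y"
    and X3: "X$3 = m1$3 * x + m2$3 * y + k"
    by (simp_all add: X_def vector_3 algebra_simps)
  have "X$3 \<noteq> 0" using nz X3 by (simp add: m1_def m2_def)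
  then have "g (B *v X) = (X$3)^4 * g (B *v vector [X$1 / X$3, X$2 / X$3, 1])"
    by (rule chart_value[OF g])
  then show ?thesis using e unfolding X1 X2 X3 m1_def m2_def by simp
qed

lemma coords_k:
  assumes "coords_at p B" "coords_at p B'"
  shows "\<exists>k. k \<noteq> 0 \<and> B' *v e3 = k *\<^sub>R (B *v e3)"
proof -
  obtain c where c: "c \<noteq> 0" "B *v e3 = c *\<^sub>R p" using assms(1) unfolding coords_at_def same_pt_def by blast
  obtain c' where c': "c' \<noteq> 0" "B' *v e3 = c' *\<^sub>R p" using assms(2) unfolding coords_at_def same_pt_def by blast
  have "B' *v e3 = (c' / c) *\<^sub>R (B *v e3)" using c c' by simp
  then show ?thesis using c c' by (intro exI[of _ "c'/c"]) simp
qed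

definition Bpt :: "(real^3 \<Rightarrow> real) \<Rightarrow> real^3^3 \<Rightarrow> bool" where
  "Bpt g B \<longleftrightarrow> (\<exists>\<delta>>0. \<exists>K. \<forall>x y. \<bar>x\<bar> \<le> \<delta> \<longrightarrow> \<bar>y\<bar> \<le> \<delta> \<longrightarrow>
      \<bar>g (B *v vector [x, y, 1])\<bar> \<le> K * (x^2 + y^2))"

definition Bpl :: "(real^3 \<Rightarrow> real) \<Rightarrow> real^3^3 \<Rightarrow> bool" where
  "Bpl g B \<longleftrightarrow> (\<exists>\<delta>>0. \<exists>K. \<forall>x y. \<bar>x\<bar> \<le> \<delta> \<longrightarrow> \<bar>y\<bar> \<le> \<delta> \<longrightarrow>
      \<bar>g (B *v vector [x, y, 1])\<bar> \<le> K * (x^4 + y^2))"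

lemma transfer_pt:
  assumes g: "g \<in> H4" and B: "coords_at p B" and B': "coords_at p B'" and b: "Bpt g B"
  shows "Bpt g B'"
proof -
  obtain k where k: "k \<noteq> 0" "B' *v e3 = k *\<^sub>R (B *v e3)" using coords_k[OF B B'] by blast
  obtain Bi where Bi: "\<And>w. B *v (Bi *v w) = w" using B inv_ex unfolding coords_at_def by metis
  obtain \<delta> K where d: "0 < \<delta>" and bd: "\<And>x y. \<bar>x\<bar> \<le> \<delta> \<Longrightarrow> \<bar>y\<bar> \<le> \<delta> \<Longrightarrow>
      \<bar>g (B *v vector [x, y, 1])\<bar> \<le> K * (x^2 + y^2)" using b unfolding Bpt_def by blast
  show ?thesis unfolding Bpt_def
    by (rule TRpt_abs[where G="\<lambda>x y. g (B *v vector [x, y, 1])" and G'="\<lambda>x y. g (B' *v vector [x, y, 1])",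
          OF k(1) d chart_rel[OF g Bi k(2)] bd])
qed

lemma transfer_pl:
  assumes g: "g \<in> H4" and B: "coords_at_line p l B" and B': "coords_at_line p l B'" and b: "Bpl g B"
  shows "Bpl g B'"
proof -
  obtain k where k: "k \<noteq> 0" "B' *v e3 = k *\<^sub>R (B *v e3)"
    using coords_k B B' unfolding coords_at_line_def by blast
  obtain Bi where Bi: "\<And>w. B *v (Bi *v w) = w" using B inv_ex unfolding coords_at_line_def coords_at_def by metis
  have "l \<bullet> (B' *v e1) = 0" using B' unfolding coords_at_line_def by (simp add: vector_3)
  then have "l \<bullet> (B *v (Bi *v (B' *v e1))) = 0" using Bi by simp
  then have m12: "(Bi *v (B' *v e1))$2 = 0" using B unfolding coords_at_line_def by blast
  obtain \<delta> K where d: "0 < \<delta>" and bd: "\<And>x y. \<bar>x\<bar> \<le> \<delta> \<Longrightarrow> \<bar>y\<bar> \<le> \<delta> \<Longrightarrow>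
      \<bar>g (B *v vector [x, y, 1])\<bar> \<le> K * (x^4 + y^2)" using b unfolding Bpl_def by blast
  note rel = chart_rel[OF g Bi k(2)]
  show ?thesis unfolding Bpl_def
    by (rule TRpl_abs[where G="\<lambda>x y. g (B *v vector [x, y, 1])" and G'="\<lambda>x y. g (B' *v vector [x, y, 1])",
          OF k(1) d _ bd]) (use rel m12 in simp)
qed


lemma lc_Pa: "local_coeffs g B a \<Longrightarrow> g (B *v vector [x, y, 1]) = Pa a x y"
  unfolding local_coeffs_def Pa_def by blast

lemma lc_wf: "local_coeffs g B a \<Longrightarrow> wf4 a"
  unfolding local_coeffs_def wf4_def by blast

lemma ord_ge2: "ord_ge a 2 \<longleftrightarrow> a 0 0 = 0 \<and> a 1 0 = 0 \<and> a 0 1 = 0"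
  unfolding ord_ge_def using cls1 by fastforce

lemma center_zero:
  assumes "coords_at p B" "g \<in> H4"
  shows "g (B *v e3) = 0 \<longleftrightarrow> g p = 0"
proof -
  obtain c where c: "c \<noteq> 0" "B *v e3 = c *\<^sub>R p" using assms(1) unfolding coords_at_def same_pt_def by blast
  then show ?thesis using H4_homog[OF assms(2), of c p] by simp
qed

lemma Pa_center: "local_coeffs g B a \<Longrightarrow> a 0 0 = g (B *v e3)"
  using lc_Pa[of g B a 0 0] by (simp add: Pa00)

lemma Ipt_char:
  assumes B0: "coords_at s B0"
  shows "g \<in> I_pt s \<longleftrightarrow> g \<in> H4 \<and> Bpt g B0"
proof
  assume "g \<in> I_pt s"
  then obtain B a where g: "g \<in> H4" and B: "coords_at s B" and lc: "local_coeffs g B a" and o: "ord_ge a 2"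
    unfolding I_pt_def by blast
  have z: "a 0 0 = 0" "a 1 0 = 0" "a 0 1 = 0" using o by (auto simp: ord_ge2)
  have "Bpt g B" unfolding Bpt_def
    by (rule exI[of _ 1]) (use bound_pt[OF z] lc_Pa[OF lc] in auto)
  then show "g \<in> H4 \<and> Bpt g B0" using transfer_pt[OF g B B0] g by blast
next
  assume "g \<in> H4 \<and> Bpt g B0"
  then have g: "g \<in> H4" and b: "Bpt g B0" by auto
  obtain a where lc: "local_coeffs g B0 a" using LC_exists[OF g] by blast
  obtain \<delta> K where d: "0 < \<delta>" and bd: "\<And>x y. \<bar>x\<bar> \<le> \<delta> \<Longrightarrow> \<bar>y\<bar> \<le> \<delta> \<Longrightarrow> \<bar>Pa a x y\<bar> \<le> K * (x^2 + y^2)"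
    using b lc_Pa[OF lc] unfolding Bpt_def by metis
  have "ord_ge a 2" using coeff_pt_bound[OF d bd] by (simp add: ord_ge2)
  then show "g \<in> I_pt s" unfolding I_pt_def using g B0 lc by blast
qed

lemma Ipl_char:
  assumes B0: "coords_at_line p l B0"
  shows "g \<in> I_pl p l \<longleftrightarrow> g \<in> H4 \<and> Bpl g B0"
proof
  assume "g \<in> I_pl p l"
  then obtain B a where g: "g \<in> H4" and B: "coords_at_line p l B" and lc: "local_coeffs g B a" and o: "lowpl a"
    unfolding I_pl_def lowpl_def by blast
  have "Bpl g B" unfolding Bpl_def
    by (rule exI[of _ 1]) (use bound_pl[OF o] lc_Pa[OF lc] in auto)
  then show "g \<in> H4 \<and> Bpl g B0" using transfer_pl[OF g B B0] g by blast
next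
  assume "g \<in> H4 \<and> Bpl g B0"
  then have g: "g \<in> H4" and b: "Bpl g B0" by auto
  obtain a where lc: "local_coeffs g B0 a" using LC_exists[OF g] by blast
  obtain \<delta> K where d: "0 < \<delta>" and bd: "\<And>x y. \<bar>x\<bar> \<le> \<delta> \<Longrightarrow> \<bar>y\<bar> \<le> \<delta> \<Longrightarrow> \<bar>Pa a x y\<bar> \<le> K * (x^4 + y^2)"
    using b lc_Pa[OF lc] unfolding Bpl_def by metis
  have "lowpl a" using coeff_pl_bound[OF d bd] .
  then show "g \<in> I_pl p l" unfolding I_pl_def lowpl_def using g B0 lc by blast
qed

lemma lowpl_of_Bpl:
  assumes "Bpl g B" "local_coeffs g B a"
  shows "lowpl a"
proof -
  obtain \<delta> K where d: "0 < \<delta>" and bd: "\<And>x y. \<bar>x\<bar> \<le> \<delta> \<Longrightarrow> \<bar>y\<bar> \<le> \<delta> \<Longrightarrow> \<bar>Pa a x y\<bar> \<le> K * (x^4 + y^2)"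
    using assms lc_Pa[OF assms(2)] unfolding Bpl_def by metis
  show ?thesis using coeff_pl_bound[OF d bd] .
qed

lemma lowpt_of_Bpt:
  assumes "Bpt g B" "local_coeffs g B a"
  shows "a 0 0 = 0 \<and> a 1 0 = 0 \<and> a 0 1 = 0"
proof -
  obtain \<delta> K where d: "0 < \<delta>" and bd: "\<And>x y. \<bar>x\<bar> \<le> \<delta> \<Longrightarrow> \<bar>y\<bar> \<le> \<delta> \<Longrightarrow> \<bar>Pa a x y\<bar> \<le> K * (x^2 + y^2)"
    using assms lc_Pa[OF assms(2)] unfolding Bpt_def by metis
  show ?thesis using coeff_pt_bound[OF d bd] .
qed

lemma Bpt_add: "Bpt g1 B \<Longrightarrow> Bpt g2 B \<Longrightarrow> Bpt (g1 + g2) B"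
proof -
  assume "Bpt g1 B" "Bpt g2 B"
  then obtain d1 K1 d2 K2 where d: "0 < d1" "0 < d2"
    and b1: "\<And>x y. \<bar>x\<bar> \<le> d1 \<Longrightarrow> \<bar>y\<bar> \<le> d1 \<Longrightarrow> \<bar>g1 (B *v vector [x, y, 1])\<bar> \<le> K1 * (x^2 + y^2)"
    and b2: "\<And>x y. \<bar>x\<bar> \<le> d2 \<Longrightarrow> \<bar>y\<bar> \<le> d2 \<Longrightarrow> \<bar>g2 (B *v vector [x, y, 1])\<bar> \<le> K2 * (x^2 + y^2)"
    unfolding Bpt_def by metis
  have "\<bar>(g1 + g2) (B *v vector [x, y, 1])\<bar> \<le> (K1 + K2) * (x^2 + y^2)" if "\<bar>x\<bar> \<le> min d1 d2" "\<bar>y\<bar> \<le> min d1 d2" for x y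
    using b1[of x y] b2[of x y] that by (simp add: algebra_simps)
  then show ?thesis unfolding Bpt_def using d by (intro exI[of _ "min d1 d2"]) auto
qed

lemma Bpl_add: "Bpl g1 B \<Longrightarrow> Bpl g2 B \<Longrightarrow> Bpl (g1 + g2) B"
proof -
  assume "Bpl g1 B" "Bpl g2 B"
  then obtain d1 K1 d2 K2 where d: "0 < d1" "0 < d2"
    and b1: "\<And>x y. \<bar>x\<bar> \<le> d1 \<Longrightarrow> \<bar>y\<bar> \<le> d1 \<Longrightarrow> \<bar>g1 (B *v vector [x, y, 1])\<bar> \<le> K1 * (x^4 + y^2)"
    and b2: "\<And>x y. \<bar>x\<bar> \<le> d2 \<Longrightarrow> \<bar>y\<bar> \<le> d2 \<Longrightarrow> \<bar>g2 (B *v vector [x, y, 1])\<bar> \<le> K2 * (x^4 + y^2)"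
    unfolding Bpl_def by metis
  have "\<bar>(g1 + g2) (B *v vector [x, y, 1])\<bar> \<le> (K1 + K2) * (x^4 + y^2)" if "\<bar>x\<bar> \<le> min d1 d2" "\<bar>y\<bar> \<le> min d1 d2" for x y
    using b1[of x y] b2[of x y] that by (simp add: algebra_simps)
  then show ?thesis unfolding Bpl_def using d by (intro exI[of _ "min d1 d2"]) auto
qed

lemma Bpt_scale: "Bpt g B \<Longrightarrow> Bpt (fscale c g) B"
proof -
  assume "Bpt g B"
  then obtain d K where d: "0 < d"
    and b: "\<And>x y. \<bar>x\<bar> \<le> d \<Longrightarrow> \<bar>y\<bar> \<le> d \<Longrightarrow> \<bar>g (B *v vector [x, y, 1])\<bar> \<le> K * (x^2 + y^2)"
    unfolding Bpt_def by metis
  have "\<bar>fscale c g (B *v vector [x, y, 1])\<bar> \<le> (\<bar>c\<bar> * K) * (x^2 + y^2)" if "\<bar>x\<bar> \<le> d" "\<bar>y\<bar> \<le> d" for x y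
    using mult_left_mono[OF b[OF that], of "\<bar>c\<bar>"] by (simp add: fscale_def abs_mult mult.assoc)
  then show ?thesis unfolding Bpt_def using d by blast
qed

lemma Bpl_scale: "Bpl g B \<Longrightarrow> Bpl (fscale c g) B"
proof -
  assume "Bpl g B"
  then obtain d K where d: "0 < d"
    and b: "\<And>x y. \<bar>x\<bar> \<le> d \<Longrightarrow> \<bar>y\<bar> \<le> d \<Longrightarrow> \<bar>g (B *v vector [x, y, 1])\<bar> \<le> K * (x^4 + y^2)"
    unfolding Bpl_def by metis
  have "\<bar>fscale c g (B *v vector [x, y, 1])\<bar> \<le> (\<bar>c\<bar> * K) * (x^4 + y^2)" if "\<bar>x\<bar> \<le> d" "\<bar>y\<bar> \<le> d" for x y
    using mult_left_mono[OF b[OF that], of "\<bar>c\<bar>"] by (simp add: fscale_def abs_mult mult.assoc)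
  then show ?thesis unfolding Bpl_def using d by blast
qed

lemma Fpt_Bpt:
  assumes h: "h \<in> P34" "h s = 0" and B0: "coords_at s B0"
  shows "Bpt h B0"
proof -
  have hH: "h \<in> H4" and nn: "\<And>v. 0 \<le> h v" using h(1) by (auto simp: P34_def)
  obtain a where lc: "local_coeffs h B0 a" using LC_exists[OF hH] by blast
  have pn: "\<And>x y. 0 \<le> Pa a x y" using nn lc_Pa[OF lc] by metis
  have z: "a 0 0 = 0" using Pa_center[OF lc] center_zero[OF B0 hH] h(2) by simp
  have "a 1 0 = 0 \<and> a 0 1 = 0" using coeff_pt_nonneg[OF pn z] .
  then show ?thesis unfolding Bpt_def
    by (intro exI[of _ 1]) (use bound_pt[of a] z lc_Pa[OF lc] in auto)
qed

lemma Fpl_Bpl: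
  assumes h: "h \<in> F_pl p l" and B0: "coords_at_line p l B0"
  shows "Bpl h B0"
proof -
  have hH: "h \<in> H4" and nn: "\<And>v. 0 \<le> h v" and hp: "h p = 0" using h by (auto simp: F_pl_def P34_def)
  obtain B a where B: "coords_at_line p l B" and lc: "local_coeffs h B a" and t: "tilde a 0 0 = 0"
    using h unfolding F_pl_def by blast
  have pn: "\<And>x y. 0 \<le> Pa a x y" using nn lc_Pa[OF lc] by metis
  have z: "a 0 0 = 0" using Pa_center[OF lc] center_zero[of p B h] B hH hp
    by (simp add: coords_at_line_def)
  have z2: "a 1 0 = 0" "a 0 1 = 0" using coeff_pt_nonneg[OF pn z] by auto
  have z3: "a 2 0 = 0" using t by (simp add: tilde00)
  have "a 3 0 = 0 \<and> a 1 1 = 0" using coeff_pl_nonneg[OF pn z z2 z3] .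
  then have lp: "lowpl a" using z z2 z3 by (simp add: lowpl_def)
  have "Bpl h B" unfolding Bpl_def
    by (intro exI[of _ 1]) (use bound_pl[OF lp] lc_Pa[OF lc] in auto)
  then show ?thesis using transfer_pl[OF hH B B0] by blast
qed


definition nbhd :: "real^3^3 \<Rightarrow> real \<Rightarrow> (real^3) set" where
  "nbhd Bi \<delta> = {v. \<bar>(Bi *v v)$1\<bar> < \<delta> * \<bar>(Bi *v v)$3\<bar>} \<inter> {v. \<bar>(Bi *v v)$2\<bar> < \<delta> * \<bar>(Bi *v v)$3\<bar>}"

lemma open_nbhd: "open (nbhd Bi \<delta>)"
  unfolding nbhd_def by (intro open_Int open_Collect_less continuous_intros)

lemma finite_min_pos:
  fixes e :: "nat \<Rightarrow> real"
  assumes "\<And>k. k < N \<Longrightarrow> 0 < e k"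
  shows "\<exists>\<epsilon>>0. \<forall>k<N. \<epsilon> \<le> e k"
proof -
  define \<epsilon> where "\<epsilon> = Min (insert 1 (e ` {..<N}))"
  have "0 < \<epsilon>" unfolding \<epsilon>_def using assms by (subst Min_gr_iff) auto
  moreover have "\<forall>k<N. \<epsilon> \<le> e k" unfolding \<epsilon>_def by (auto intro: Min_le)
  ultimately show ?thesis by blast
qed

lemma global_pos:
  fixes f g :: "real^3 \<Rightarrow> real" and C :: "nat \<Rightarrow> real^3^3"
  assumes fH: "f \<in> H4" and gH: "g \<in> H4" and fnn: "\<And>v. 0 \<le> f v"
    and inv: "\<And>k. k < N \<Longrightarrow> invertible (C k)"
    and loc: "\<And>k. k < N \<Longrightarrow> \<exists>\<delta>>0. \<exists>\<epsilon>0>0. \<forall>x y \<epsilon>. \<bar>x\<bar> \<le> \<delta> \<longrightarrow> \<bar>y\<bar> \<le> \<delta> \<longrightarrow> 0 \<le> \<epsilon> \<longrightarrow> \<epsilon> \<le> \<epsilon>0 \<longrightarrow>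
                0 \<le> f (C k *v vector [x, y, 1]) + \<epsilon> * g (C k *v vector [x, y, 1])"
    and zeros: "\<And>v. v \<noteq> 0 \<Longrightarrow> f v = 0 \<Longrightarrow> \<exists>k<N. \<exists>c. c \<noteq> 0 \<and> v = c *\<^sub>R (C k *v e3)"
  shows "\<exists>\<epsilon>>0. \<forall>v. 0 \<le> f v + \<epsilon> * g v"
proof -
  have "\<forall>k. \<exists>Bi \<delta> \<epsilon>0. k < N \<longrightarrow> (\<forall>w. C k *v (Bi *v w) = w) \<and> (\<forall>w. Bi *v (C k *v w) = w) \<and> 0 < \<delta> \<and> 0 < \<epsilon>0 \<and>
     (\<forall>x y \<epsilon>. \<bar>x\<bar> \<le> \<delta> \<longrightarrow> \<bar>y\<bar> \<le> \<delta> \<longrightarrow> 0 \<le> \<epsilon> \<longrightarrow> \<epsilon> \<le> \<epsilon>0 \<longrightarrow>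
                0 \<le> f (C k *v vector [x, y, 1]) + \<epsilon> * g (C k *v vector [x, y, 1]))"
  proof
    fix k show "\<exists>Bi \<delta> \<epsilon>0. k < N \<longrightarrow> (\<forall>w. C k *v (Bi *v w) = w) \<and> (\<forall>w. Bi *v (C k *v w) = w) \<and> 0 < \<delta> \<and> 0 < \<epsilon>0 \<and>
     (\<forall>x y \<epsilon>. \<bar>x\<bar> \<le> \<delta> \<longrightarrow> \<bar>y\<bar> \<le> \<delta> \<longrightarrow> 0 \<le> \<epsilon> \<longrightarrow> \<epsilon> \<le> \<epsilon>0 \<longrightarrow>
                0 \<le> f (C k *v vector [x, y, 1]) + \<epsilon> * g (C k *v vector [x, y, 1]))"
    proof (cases "k < N")
      case True
      obtain Bi where "\<And>w. C k *v (Bi *v w) = w" "\<And>w. Bi *v (C k *v w) = w" using inv_ex[OF inv[OF True]] by metis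
      then show ?thesis using loc[OF True] by blast
    qed simp
  qed
  then obtain Bi \<delta> \<epsilon>0 where ch: "\<And>k. k < N \<Longrightarrow> (\<forall>w. C k *v (Bi k *v w) = w) \<and> (\<forall>w. Bi k *v (C k *v w) = w) \<and> 0 < \<delta> k \<and> 0 < \<epsilon>0 k \<and>
     (\<forall>x y \<epsilon>. \<bar>x\<bar> \<le> \<delta> k \<longrightarrow> \<bar>y\<bar> \<le> \<delta> k \<longrightarrow> 0 \<le> \<epsilon> \<longrightarrow> \<epsilon> \<le> \<epsilon>0 k \<longrightarrow>
                0 \<le> f (C k *v vector [x, y, 1]) + \<epsilon> * g (C k *v vector [x, y, 1]))"
    by metis
  define U where "U = (\<Union>k<N. nbhd (Bi k) (\<delta> k))"
  define Kc where "Kc = sphere (0::real^3) 1 - U"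
  have oU: "open U" unfolding U_def by (intro open_UN ballI open_nbhd)
  have cK: "compact Kc" unfolding Kc_def by (intro compact_diff compact_sphere oU)
  have fcont: "continuous_on S f" for S using H4_cont[OF fH] continuous_on_subset by blast
  have gcont: "continuous_on S g" for S using H4_cont[OF gH] continuous_on_subset by blast
  have zU: "v \<in> U" if nz: "v \<noteq> 0" "f v = 0" for v
  proof -
    obtain k c where k: "k < N" "c \<noteq> 0" "v = c *\<^sub>R (C k *v e3)" using zeros[OF nz] by blast
    have "Bi k *v v = c *\<^sub>R e3" using ch[OF k(1)] k(3) by (simp add: matrix_vector_mult_scaleR)
    then have "v \<in> nbhd (Bi k) (\<delta> k)" using ch[OF k(1)] k(2) by (simp add: nbhd_def vector_3)
    then show ?thesis using k(1) by (auto simp: U_def)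
  qed
  obtain m where m: "0 < m" "\<And>v. v \<in> Kc \<Longrightarrow> m \<le> f v"
  proof (cases "Kc = {}")
    case True then show ?thesis using that[of 1] by auto
  next
    case False
    obtain v0 where v0: "v0 \<in> Kc" "\<And>v. v \<in> Kc \<Longrightarrow> f v0 \<le> f v"
      using continuous_attains_inf[OF cK False fcont] by blast
    have "v0 \<noteq> 0" using v0(1) by (auto simp: Kc_def)
    moreover have "v0 \<notin> U" using v0(1) by (auto simp: Kc_def)
    ultimately have "f v0 \<noteq> 0" using zU by blast
    then have "0 < f v0" using fnn[of v0] by simp
    then show ?thesis using that[of "f v0"] v0 by blast
  qed
  obtain M where M: "0 \<le> M" "\<And>v. v \<in> sphere 0 1 \<Longrightarrow> \<bar>g v\<bar> \<le> M"
  proof -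
    have "sphere (0::real^3) 1 \<noteq> {}" by (simp add: sphere_eq_empty)
    then obtain v1 where v1: "v1 \<in> sphere (0::real^3) 1" "\<And>v. v \<in> sphere 0 1 \<Longrightarrow> \<bar>g v\<bar> \<le> \<bar>g v1\<bar>"
      using continuous_attains_sup[OF compact_sphere _ continuous_on_rabs[OF gcont]] by blast
    then show ?thesis using that[of "\<bar>g v1\<bar>"] by auto
  qed
  obtain \<epsilon>1 where e1: "0 < \<epsilon>1" "\<And>k. k < N \<Longrightarrow> \<epsilon>1 \<le> \<epsilon>0 k"
    using finite_min_pos[of N \<epsilon>0] ch by blast
  define \<epsilon> where "\<epsilon> = min \<epsilon>1 (m / (M + 1))"
  have e0: "0 < \<epsilon>" using e1 m M by (simp add: \<epsilon>_def)
  have "0 \<le> f v + \<epsilon> * g v" for v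
  proof (cases "v = 0")
    case True then show ?thesis using H4_zero_at_0[OF fH] H4_zero_at_0[OF gH] by simp
  next
    case False
    define w where "w = (1 / norm v) *\<^sub>R v"
    have nv: "0 < norm v" using False by simp
    have vw: "v = norm v *\<^sub>R w" using nv by (simp add: w_def)
    have ws: "w \<in> sphere 0 1" using nv by (simp add: w_def)
    have hom: "f v + \<epsilon> * g v = (norm v)^4 * (f w + \<epsilon> * g w)"
      using H4_homog[OF fH, of "norm v" w] H4_homog[OF gH, of "norm v" w] vw by (simp add: algebra_simps)
    have "0 \<le> f w + \<epsilon> * g w"
    proof (cases "w \<in> U")
      case True
      then obtain k where k: "k < N" and wn: "w \<in> nbhd (Bi k) (\<delta> k)" by (auto simp: U_def)
      define X where "X = Bi k *v w"
      have X: "\<bar>X$1\<bar> < \<delta> k * \<bar>X$3\<bar>" "\<bar>X$2\<bar> < \<delta> k * \<bar>X$3\<bar>" using wn by (auto simp: nbhd_def X_def)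
      have X3: "X$3 \<noteq> 0" using X(1) by auto
      have wX: "w = C k *v X" using ch[OF k] by (simp add: X_def)
      have x1: "\<bar>X$1 / X$3\<bar> \<le> \<delta> k" using X(1) X3 by (simp add: abs_divide divide_le_eq)
      have x2: "\<bar>X$2 / X$3\<bar> \<le> \<delta> k" using X(2) X3 by (simp add: abs_divide divide_le_eq)
      have epk: "\<epsilon> \<le> \<epsilon>0 k" using e1(2)[OF k] by (simp add: \<epsilon>_def)
      have "0 \<le> f (C k *v vector [X$1 / X$3, X$2 / X$3, 1]) + \<epsilon> * g (C k *v vector [X$1 / X$3, X$2 / X$3, 1])"
        using ch[OF k] x1 x2 e0 epk by auto
      then have "0 \<le> (X$3)^4 * (f (C k *v vector [X$1 / X$3, X$2 / X$3, 1]) + \<epsilon> * g (C k *v vector [X$1 / X$3, X$2 / X$3, 1]))"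
        by simp
      then show ?thesis unfolding wX using chart_value[OF fH X3, of "C k"] chart_value[OF gH X3, of "C k"]
        by (simp add: algebra_simps)
    next
      case False
      then have wK: "w \<in> Kc" using ws by (simp add: Kc_def)
      have "\<epsilon> * \<bar>g w\<bar> \<le> (m / (M + 1)) * M" using M(2)[OF ws] e0 M(1)
        by (intro mult_mono) (auto simp: \<epsilon>_def)
      also have "\<dots> \<le> m" using m(1) M(1) by (simp add: field_simps)
      finally have "\<epsilon> * \<bar>g w\<bar> \<le> f w" using m(2)[OF wK] by linarith
      moreover have "\<epsilon> * (- \<bar>g w\<bar>) \<le> \<epsilon> * g w" using e0 by (intro mult_left_mono) auto
      ultimately show ?thesis by linarith
    qed
    then show ?thesis using hom by simp
  qed
  then show ?thesis using e0 by blast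
qed


lemma mod_fscale: "module fscale"
  unfolding module_def fscale_def by (auto simp: fun_eq_iff algebra_simps)

lemma vs_fscale: "vector_space fscale"
  unfolding vector_space_def fscale_def by (auto simp: fun_eq_iff algebra_simps)

lemma Bpt_zero: "Bpt 0 B"
  unfolding Bpt_def by (rule exI[of _ 1]) (auto intro: exI[of _ 0])

lemma Bpl_zero: "Bpl 0 B"
  unfolding Bpl_def by (rule exI[of _ 1]) (auto intro: exI[of _ 0])

lemma loc_combine:
  fixes F G r :: "real \<Rightarrow> real \<Rightarrow> real"
  assumes "0 < \<delta>1" "0 < \<delta>2" "0 < c"
    and lo: "\<And>x y. \<bar>x\<bar> \<le> \<delta>1 \<Longrightarrow> \<bar>y\<bar> \<le> \<delta>1 \<Longrightarrow> c * r x y \<le> F x y"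
    and up: "\<And>x y. \<bar>x\<bar> \<le> \<delta>2 \<Longrightarrow> \<bar>y\<bar> \<le> \<delta>2 \<Longrightarrow> \<bar>G x y\<bar> \<le> K * r x y"
    and r0: "\<And>x y. 0 \<le> r x y"
  shows "\<exists>\<delta>>0. \<exists>\<epsilon>0>0. \<forall>x y \<epsilon>. \<bar>x\<bar> \<le> \<delta> \<longrightarrow> \<bar>y\<bar> \<le> \<delta> \<longrightarrow> 0 \<le> \<epsilon> \<longrightarrow> \<epsilon> \<le> \<epsilon>0 \<longrightarrow> 0 \<le> F x y + \<epsilon> * G x y"
proof -
  define \<epsilon>0 where "\<epsilon>0 = c / (\<bar>K\<bar> + 1)"
  have e0: "0 < \<epsilon>0" using assms by (simp add: \<epsilon>0_def)
  have ek: "\<epsilon>0 * \<bar>K\<bar> \<le> c" using assms by (simp add: \<epsilon>0_def field_simps)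
  have "0 \<le> F x y + \<epsilon> * G x y" if xy: "\<bar>x\<bar> \<le> min \<delta>1 \<delta>2" "\<bar>y\<bar> \<le> min \<delta>1 \<delta>2" and e: "0 \<le> \<epsilon>" "\<epsilon> \<le> \<epsilon>0" for x y \<epsilon>
  proof -
    have g: "\<bar>G x y\<bar> \<le> \<bar>K\<bar> * r x y" using up[of x y] xy r0[of x y] abs_bound_K by auto
    have "\<epsilon> * \<bar>G x y\<bar> \<le> \<epsilon>0 * (\<bar>K\<bar> * r x y)" using g e by (intro mult_mono) auto
    also have "\<dots> = (\<epsilon>0 * \<bar>K\<bar>) * r x y" by simp
    also have "\<dots> \<le> c * r x y" using ek r0[of x y] by (intro mult_right_mono) auto
    finally have "\<epsilon> * \<bar>G x y\<bar> \<le> c * r x y" .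
    moreover have "\<epsilon> * (- \<bar>G x y\<bar>) \<le> \<epsilon> * G x y" using e by (intro mult_left_mono) auto
    moreover have "c * r x y \<le> F x y" using lo[of x y] xy by auto
    ultimately show ?thesis by linarith
  qed
  then show ?thesis using e0 assms by (intro exI[of _ "min \<delta>1 \<delta>2"] conjI exI[of _ \<epsilon>0]) auto
qed

lemma g_vanish_pt:
  assumes "g \<in> H4" "Bpt g B" "coords_at s B" shows "g s = 0"
proof -
  obtain a where lc: "local_coeffs g B a" using LC_exists[OF assms(1)] by blast
  have "a 0 0 = 0" using lowpt_of_Bpt[OF assms(2) lc] by simp
  then show ?thesis using Pa_center[OF lc] center_zero[OF assms(3,1)] by simp
qed

lemma g_vanish_pl:
  assumes "g \<in> H4" "Bpl g B" "coords_at_line p l B" shows "g p = 0"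
proof -
  obtain a where lc: "local_coeffs g B a" using LC_exists[OF assms(1)] by blast
  have "a 0 0 = 0" using lowpl_of_Bpl[OF assms(2) lc] by (simp add: lowpl_def)
  then show ?thesis using Pa_center[OF lc] center_zero[of p B g] assms(1,3) by (simp add: coords_at_line_def)
qed

theorem mainTheorem4:
  fixes n m :: nat and s p l :: "nat \<Rightarrow> real^3" and f :: "real^3 \<Rightarrow> real"
  assumes conf: "configuration n s m p l"
    and fF: "f \<in> F_S n s m p l"
    and h1: "zero_set f = {v. v \<noteq> 0 \<and> ((\<exists>i<n. same_pt v (s i)) \<or> (\<exists>j<m. same_pt v (p j)))}"
    and h2: "\<forall>i<n. \<exists>B a. coords_at (s i) B \<and> local_coeffs f B a \<and> inp a = {}"
    and h3: "\<forall>j<m. \<exists>B a. coords_at (p j) B \<and> local_coeffs f B a \<and> ord_is a 2"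
    and h4: "\<forall>j<m. \<exists>B a. coords_at_line (p j) (l j) B \<and> local_coeffs f B a \<and>
                poly (pderiv (pderiv (disc a))) 0 \<noteq> 0"
  shows "fspan (F_S n s m p l) = I_S n s m p l \<and>
         fdim (I_S n s m p l) = fdim (F_S n s m p l)"
proof -
  obtain Bs as where hs: "\<And>i. i < n \<Longrightarrow> coords_at (s i) (Bs i) \<and> local_coeffs f (Bs i) (as i) \<and> inp (as i) = {}"
    using h2 by metis
  obtain Bp ap where hp: "\<And>j. j < m \<Longrightarrow> coords_at_line (p j) (l j) (Bp j) \<and> local_coeffs f (Bp j) (ap j) \<and>
                poly (pderiv (pderiv (disc (ap j)))) 0 \<noteq> 0"
    using h4 by metis
  have fP: "f \<in> P34" and fpt: "\<And>i. i < n \<Longrightarrow> f \<in> F_pt (s i)" and fpl: "\<And>j. j < m \<Longrightarrow> f \<in> F_pl (p j) (l j)"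
    using fF by (auto simp: F_S_def)
  have fH: "f \<in> H4" and fnn: "\<And>v. 0 \<le> f v" using fP by (auto simp: P34_def)
  define J where "J = {g. g \<in> H4 \<and> (\<forall>i<n. Bpt g (Bs i)) \<and> (\<forall>j<m. Bpl g (Bp j))}"
  have IJ: "I_S n s m p l = J"
    unfolding I_S_def J_def using Ipt_char hs Ipl_char hp by blast
  have FJ: "F_S n s m p l \<subseteq> J"
  proof
    fix h assume h: "h \<in> F_S n s m p l"
    then have hP: "h \<in> P34" by (simp add: F_S_def)
    have "Bpt h (Bs i)" if "i < n" for i
      using h hs[OF that] Fpt_Bpt[OF hP] that by (auto simp: F_S_def F_pt_def)
    moreover have "Bpl h (Bp j)" if "j < m" for j
      using h hp[OF that] Fpl_Bpl that by (auto simp: F_S_def)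
    ultimately show "h \<in> J" using hP by (auto simp: J_def P34_def)
  qed
  have fJ: "f \<in> J" using FJ fF by blast
  have subJ: "module.subspace fscale J"
    unfolding module.subspace_def[OF mod_fscale]
    by (auto simp: J_def H4_0 H4_add H4_scale Bpt_zero Bpl_zero Bpt_add Bpl_add Bpt_scale Bpl_scale)
  have sp1: "fspan (F_S n s m p l) \<subseteq> J"
    unfolding fspan_def by (rule module.span_minimal[OF mod_fscale FJ subJ])
  have sp2: "J \<subseteq> fspan (F_S n s m p l)"
  proof
    fix g assume gJ: "g \<in> J"
    then have gH: "g \<in> H4" and gs: "\<And>i. i < n \<Longrightarrow> Bpt g (Bs i)" and gp: "\<And>j. j < m \<Longrightarrow> Bpl g (Bp j)"
      by (auto simp: J_def)
    define C where "C k = (if k < n then Bs k else Bp (k - n))" for k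
    have invC: "invertible (C k)" if "k < n + m" for k
      using hs hp that unfolding C_def coords_at_def coords_at_line_def by (cases "k < n") auto
    have locC: "\<exists>\<delta>>0. \<exists>\<epsilon>0>0. \<forall>x y \<epsilon>. \<bar>x\<bar> \<le> \<delta> \<longrightarrow> \<bar>y\<bar> \<le> \<delta> \<longrightarrow> 0 \<le> \<epsilon> \<longrightarrow> \<epsilon> \<le> \<epsilon>0 \<longrightarrow>
                0 \<le> f (C k *v vector [x, y, 1]) + \<epsilon> * g (C k *v vector [x, y, 1])" if k: "k < n + m" for k
    proof (cases "k < n")
      case True
      have Ck: "C k = Bs k" using True by (simp add: C_def)
      note H = hs[OF True]
      have lc: "local_coeffs f (Bs k) (as k)" using H by blast
      have pn: "\<And>x y. 0 \<le> Pa (as k) x y" using fnn lc_Pa[OF lc] by metis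
      have "Bpt f (Bs k)" using fJ True by (simp add: J_def)
      then have z: "as k 0 0 = 0" "as k 1 0 = 0" "as k 0 1 = 0" using lowpt_of_Bpt lc by blast+
      have nz: "\<And>u w. (u, w) \<noteq> (0, 0) \<Longrightarrow> hpart (as k) 2 u w \<noteq> 0" using H by (auto simp: inp_def)
      obtain \<delta>1 c where d1: "0 < \<delta>1" "0 < c" and lo: "\<And>x y. \<bar>x\<bar> \<le> \<delta>1 \<Longrightarrow> \<bar>y\<bar> \<le> \<delta>1 \<Longrightarrow> c * (x^2 + y^2) \<le> Pa (as k) x y"
        using lower_pt[OF pn z nz] by blast
      obtain \<delta>2 K where d2: "0 < \<delta>2" and up: "\<And>x y. \<bar>x\<bar> \<le> \<delta>2 \<Longrightarrow> \<bar>y\<bar> \<le> \<delta>2 \<Longrightarrow> \<bar>g (Bs k *v vector [x, y, 1])\<bar> \<le> K * (x^2 + y^2)"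
        using gs[OF True] unfolding Bpt_def by blast
      show ?thesis unfolding Ck
        by (rule loc_combine[OF d1(1) d2 d1(2), of "\<lambda>x y. x^2 + y^2"]) (use lo lc_Pa[OF lc] up in auto)
    next
      case False
      define j where "j = k - n"
      have j: "j < m" using k False by (simp add: j_def)
      have Ck: "C k = Bp j" using False by (simp add: C_def j_def)
      note H = hp[OF j]
      have lc: "local_coeffs f (Bp j) (ap j)" using H by blast
      have pn: "\<And>x y. 0 \<le> Pa (ap j) x y" using fnn lc_Pa[OF lc] by metis
      have "Bpl f (Bp j)" using fJ j by (simp add: J_def)
      then have lp: "lowpl (ap j)" using lowpl_of_Bpl lc by blast
      have "poly (pderiv (pderiv (disc (ap j)))) 0 = 2 * ((ap j 2 1)^2 - 4 * ap j 0 2 * ap j 4 0)"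
        using lp by (intro disc_dd) (auto simp: lowpl_def)
      then have dne: "(ap j 2 1)^2 \<noteq> 4 * ap j 0 2 * ap j 4 0" using H by auto
      obtain \<delta>1 c where d1: "0 < \<delta>1" "0 < c" and lo: "\<And>x y. \<bar>x\<bar> \<le> \<delta>1 \<Longrightarrow> \<bar>y\<bar> \<le> \<delta>1 \<Longrightarrow> c * (x^4 + y^2) \<le> Pa (ap j) x y"
        using lower_pl[OF pn lc_wf[OF lc] lp dne] by blast
      obtain \<delta>2 K where d2: "0 < \<delta>2" and up: "\<And>x y. \<bar>x\<bar> \<le> \<delta>2 \<Longrightarrow> \<bar>y\<bar> \<le> \<delta>2 \<Longrightarrow> \<bar>g (Bp j *v vector [x, y, 1])\<bar> \<le> K * (x^4 + y^2)"
        using gp[OF j] unfolding Bpl_def by blast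
      show ?thesis unfolding Ck
        by (rule loc_combine[OF d1(1) d2 d1(2), of "\<lambda>x y. x^4 + y^2"]) (use lo lc_Pa[OF lc] up in auto)
    qed
    have zerosC: "\<exists>k<n + m. \<exists>c. c \<noteq> 0 \<and> v = c *\<^sub>R (C k *v e3)" if v: "v \<noteq> 0" "f v = 0" for v
    proof -
      have "v \<in> zero_set f" using v by (simp add: zero_set_def)
      then have "(\<exists>i<n. same_pt v (s i)) \<or> (\<exists>j<m. same_pt v (p j))" using h1 by auto
      then show ?thesis
      proof
        assume "\<exists>i<n. same_pt v (s i)"
        then obtain i c where i: "i < n" "c \<noteq> 0" "v = c *\<^sub>R s i" unfolding same_pt_def by blast
        obtain c' where c': "c' \<noteq> 0" "Bs i *v e3 = c' *\<^sub>R s i" using hs[OF i(1)] unfolding coords_at_def same_pt_def by blast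
        have "v = (c / c') *\<^sub>R (C i *v e3)" using i c' by (simp add: C_def)
        moreover have "i < n + m" "c / c' \<noteq> 0" using i c' by auto
        ultimately show ?thesis by blast
      next
        assume "\<exists>j<m. same_pt v (p j)"
        then obtain j c where j: "j < m" "c \<noteq> 0" "v = c *\<^sub>R p j" unfolding same_pt_def by blast
        obtain c' where c': "c' \<noteq> 0" "Bp j *v e3 = c' *\<^sub>R p j" using hp[OF j(1)] unfolding coords_at_line_def coords_at_def same_pt_def by blast
        have "v = (c / c') *\<^sub>R (C (n + j) *v e3)" using j c' by (simp add: C_def)
        moreover have "n + j < n + m" "c / c' \<noteq> 0" using j c' by auto
        ultimately show ?thesis by blast
      qed
    qed
    obtain \<epsilon> where e: "0 < \<epsilon>" and pos: "\<And>v. 0 \<le> f v + \<epsilon> * g v"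
      using global_pos[OF fH gH fnn invC locC zerosC] by blast
    define F' where "F' = f + fscale \<epsilon> g"
    have F'H: "F' \<in> H4" unfolding F'_def by (intro H4_add H4_scale fH gH)
    have F'P: "F' \<in> P34" using F'H pos by (simp add: P34_def F'_def fscale_def)
    have F'J: "F' \<in> J" using subJ fJ gJ unfolding F'_def module.subspace_def[OF mod_fscale] by blast
    have "F' \<in> F_S n s m p l"
    proof -
      have "F' \<in> F_pt (s i)" if i: "i < n" for i
      proof -
        have "f (s i) = 0" using fpt[OF i] by (simp add: F_pt_def)
        moreover have "g (s i) = 0" using g_vanish_pt[OF gH gs[OF i]] hs[OF i] by blast
        ultimately show ?thesis using F'P by (simp add: F_pt_def F'_def fscale_def)
      qed
      moreover have "F' \<in> F_pl (p j) (l j)" if j: "j < m" for j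
      proof -
        have "f (p j) = 0" using fpl[OF j] by (simp add: F_pl_def)
        moreover have "g (p j) = 0" using g_vanish_pl[OF gH gp[OF j]] hp[OF j] by blast
        ultimately have F'p: "F' (p j) = 0" by (simp add: F'_def fscale_def)
        obtain a where lc: "local_coeffs F' (Bp j) a" using LC_exists[OF F'H] by blast
        have "Bpl F' (Bp j)" using F'J j by (simp add: J_def)
        then have "lowpl a" using lowpl_of_Bpl lc by blast
        then have "tilde a 0 0 = 0" by (simp add: tilde00 lowpl_def)
        then show ?thesis using F'P F'p hp[OF j] lc unfolding F_pl_def by blast
      qed
      ultimately show ?thesis using F'P by (simp add: F_S_def)
    qed
    then have "F' \<in> fspan (F_S n s m p l)" and "f \<in> fspan (F_S n s m p l)"
      using fF unfolding fspan_def by (auto intro: module.span_base[OF mod_fscale])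
    then have "fscale (1 / \<epsilon>) (F' - f) \<in> fspan (F_S n s m p l)"
      unfolding fspan_def by (intro module.span_scale[OF mod_fscale] module.span_diff[OF mod_fscale])
    moreover have "fscale (1 / \<epsilon>) (F' - f) = g" using e by (simp add: F'_def fscale_def fun_eq_iff)
    ultimately show "g \<in> fspan (F_S n s m p l)" by simp
  qed
  have eq: "fspan (F_S n s m p l) = I_S n s m p l" using sp1 sp2 IJ by blast
  have "fdim (I_S n s m p l) = fdim (F_S n s m p l)"
    unfolding eq[symmetric] fdim_def fspan_def by (rule vector_space.dim_span[OF vs_fscale])
  then show ?thesis using eq by blast
qed


end
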